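(* Let $\alpha,\mu,\beta\in(0,1]$, $\xi>0$, $\lambda>0$, $\lambda\ne1$, and let $c^{(\mu)}_k$ be the coefficients of $\Big(\frac{(1-u)^\alpha}{\lambda+(1-u)^\alpha}\Big)^\mu$. The solution of the Cauchy problem $$\frac{d^\beta}{dt^\beta}p_n(t)=-\xi(\lambda+1)^\mu\sum_{m=0}^nc^{(\mu)}_{n-m}p_m(t),\qquad p_n(0)=\delta_{n0},\quad n\in\mathbb N_0,$$ has generating function $\sum_np_n(t)u^n=E_\beta\Big(-\xi t^\beta\frac{(\lambda+1)^\mu(1-u)^{\alpha\mu}}{(\lambda+(1-u)^\alpha)^\mu}\Big)$ and is given by $$p_n(t)=\sum_{m=0}^\infty\frac{[-(\lambda+1)^\mu\xi t^\beta]^m}{\Gamma(\beta m+1)}\mathcal E^{(m\mu)}_\alpha(\lambda,n),$$ $$\mathcal E^{(m\mu)}_\alpha(\lambda,n)=\begin{cases}\displaystyle\frac1{n!}\sum_{s=0}^\infty\frac{(-\lambda)^s(m\mu)_s}{s!}(\alpha s)_n,&0<\lambda<1,\\[2mm]\displaystyle\lambda^{-m\mu}\sum_{s=0}^\infty\frac{(-\lambda^{-1})^s(m\mu)_s}{s!}(-1)^n\binom{\alpha(s+m\mu)}{n},&\lambda>1,\end{cases}$$ where the inner series converge absolutely.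
   Context: $\frac{d^\beta}{dt^\beta}$ is the Caputo derivative of order $\beta$ (ordinary derivative for $\beta=1$); $E_\beta(z)=\sum_{m\ge0}z^m/\Gamma(\beta m+1)$; $(c)_s=\Gamma(c+s)/\Gamma(c)$ is the Pochhammer symbol with $(c)_0=1$, $(0)_s=\delta_{s0}$; $\binom{c}{n}=c(c-1)\cdots(c-n+1)/n!$. *)

theory Defs
  imports "HOL-Analysis.Analysis"
begin

definition has_caputo_deriv :: "real \<Rightarrow> (real \<Rightarrow> real) \<Rightarrow> real \<Rightarrow> real \<Rightarrow> bool" where
  "has_caputo_deriv \<beta> f D t \<longleftrightarrow>
     (if \<beta> = 1 then (f has_real_derivative D) (at t)
      else continuous_on {0..t} f \<and> (\<forall>s\<in>{0<..<t}. f differentiable (at s)) \<and>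
           (\<lambda>s. (t - s) powr (-\<beta>) * deriv f s) integrable_on {0..t} \<and>
           D = integral {0..t} (\<lambda>s. (t - s) powr (-\<beta>) * deriv f s) / Gamma (1 - \<beta>))"

definition mittag_leffler :: "real \<Rightarrow> real \<Rightarrow> real" where
  "mittag_leffler \<beta> z = (\<Sum>m. z ^ m / Gamma (\<beta> * real m + 1))"

definition gfun :: "real \<Rightarrow> real \<Rightarrow> real \<Rightarrow> real \<Rightarrow> real" where
  "gfun \<alpha> \<mu> lam u = ((1 - u) powr \<alpha> / (lam + (1 - u) powr \<alpha>)) powr \<mu>"

definition ccoef :: "real \<Rightarrow> real \<Rightarrow> real \<Rightarrow> nat \<Rightarrow> real" where
  "ccoef \<alpha> \<mu> lam k = (deriv ^^ k) (gfun \<alpha> \<mu> lam) 0 / fact k"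

definition Eterm_small :: "real \<Rightarrow> real \<Rightarrow> real \<Rightarrow> nat \<Rightarrow> nat \<Rightarrow> real" where
  "Eterm_small \<alpha> a lam n s = (-lam) ^ s * pochhammer a s / fact s * pochhammer (\<alpha> * real s) n"

definition Eterm_large :: "real \<Rightarrow> real \<Rightarrow> real \<Rightarrow> nat \<Rightarrow> nat \<Rightarrow> real" where
  "Eterm_large \<alpha> a lam n s =
     (-(1 / lam)) ^ s * pochhammer a s / fact s * (-1) ^ n * ((\<alpha> * (real s + a)) gchoose n)"

definition Ecoef :: "real \<Rightarrow> real \<Rightarrow> real \<Rightarrow> nat \<Rightarrow> real" where
  "Ecoef \<alpha> a lam n =
     (if lam < 1 then (1 / fact n) * (\<Sum>s. Eterm_small \<alpha> a lam n s)
      else lam powr (-a) * (\<Sum>s. Eterm_large \<alpha> a lam n s))"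

definition pterm :: "real \<Rightarrow> real \<Rightarrow> real \<Rightarrow> real \<Rightarrow> real \<Rightarrow> nat \<Rightarrow> real \<Rightarrow> nat \<Rightarrow> real" where
  "pterm \<alpha> \<mu> \<beta> \<xi> lam n t m =
     (-((lam + 1) powr \<mu>) * \<xi> * t powr \<beta>) ^ m / Gamma (\<beta> * real m + 1) * Ecoef \<alpha> (real m * \<mu>) lam n"

definition psol :: "real \<Rightarrow> real \<Rightarrow> real \<Rightarrow> real \<Rightarrow> real \<Rightarrow> nat \<Rightarrow> real \<Rightarrow> real" where
  "psol \<alpha> \<mu> \<beta> \<xi> lam n t = (\<Sum>m. pterm \<alpha> \<mu> \<beta> \<xi> lam n t m)"

end

theory Submission
  imports Defs "HOL-Complex_Analysis.Complex_Analysis"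
begin


lemma dswap:
  fixes A B :: "nat \<Rightarrow> nat \<Rightarrow> real"
  assumes AB: "\<And>m n. \<bar>A m n\<bar> \<le> B m n"
    and Bs: "\<And>m. (\<lambda>n. B m n) sums b m" and bs: "summable b"
    and As: "\<And>m. (\<lambda>n. A m n) sums a m"
  shows "(\<lambda>n. \<Sum>m. A m n) sums (\<Sum>m. a m)" "\<And>n. summable (\<lambda>m. A m n)"
    "\<And>n. summable (\<lambda>m. \<bar>A m n\<bar>)"
proof -
  have B0: "B m n \<ge> 0" for m n using AB[of m n] by linarith
  have Bb: "B m n \<le> b m" for m n
    using sum_le_suminf[of "\<lambda>n. B m n" "{n}"] Bs[of m] B0 by (auto simp: sums_iff)
  have b0: "b m \<ge> 0" for m using Bb[of m 0] B0[of m 0] by linarith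
  show colsum: "summable (\<lambda>m. A m n)" for n
    by (rule summable_comparison_test'[OF bs, of 0]) (auto intro: order_trans[OF AB Bb])
  have hB: "((\<lambda>n. B m n) has_sum b m) UNIV" for m
    using Bs[of m] B0 by (intro sums_nonneg_imp_has_sum) auto
  have hb: "(b has_sum (\<Sum>m. b m)) UNIV"
    using bs b0 by (intro sums_nonneg_imp_has_sum) (auto simp: summable_sums)
  have sB: "(\<lambda>(m,n). B m n) summable_on (UNIV \<times> UNIV)"
    using summable_on_SigmaI[where A=UNIV and B="\<lambda>_. UNIV" and f="\<lambda>(m,n). B m n" and g=b] hB hb B0
    by (auto simp: summable_on_def)
  have sA: "(\<lambda>(m,n). A m n) summable_on (UNIV \<times> UNIV)"
  proof -
    have "(\<lambda>x. norm ((\<lambda>(m,n). A m n) x)) summable_on (UNIV \<times> UNIV)"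
      proof (rule Infinite_Sum.abs_summable_on_comparison_test)
      show "(\<lambda>x. norm ((\<lambda>(m,n). B m n) x)) summable_on (UNIV \<times> UNIV)"
        using sB B0 by (simp add: case_prod_unfold)
    qed (use AB B0 in auto)
    thus ?thesis by (rule abs_summable_summable)
  qed
  then obtain S where S: "((\<lambda>(m,n). A m n) has_sum S) (UNIV \<times> UNIV)"
    by (auto simp: summable_on_def)
  have rowA: "((\<lambda>n. A m n) has_sum a m) UNIV" for m
  proof (rule norm_summable_imp_has_sum[OF _ As])
    show "summable (\<lambda>n. norm (A m n))"
      by (rule summable_comparison_test'[of "\<lambda>n. B m n" 0]) (use Bs AB in \<open>auto simp: sums_iff\<close>)
  qed
  show colabs: "summable (\<lambda>m. \<bar>A m n\<bar>)" for n
    by (rule summable_comparison_test'[OF bs, of 0]) (auto intro: order_trans[OF AB Bb])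
  have colA: "((\<lambda>m. A m n) has_sum (\<Sum>m. A m n)) UNIV" for n
  proof (rule norm_summable_imp_has_sum[OF _ summable_sums[OF colsum]])
    show "summable (\<lambda>m. norm (A m n))"
      by (rule summable_comparison_test'[OF bs, of 0]) (auto intro: order_trans[OF AB Bb])
  qed
  have "(a has_sum S) UNIV"
    using has_sum_Sigma'[where f="\<lambda>(m,n). A m n" and a=S and A=UNIV and B="\<lambda>_. UNIV" and b=a] S rowA by auto
  hence "(\<Sum>m. a m) = S" using has_sum_imp_sums sums_unique by metis
  moreover have "((\<lambda>(n,m). A m n) has_sum S) (UNIV \<times> UNIV)"
    using S has_sum_swap[where f="\<lambda>(m,n). A m n" and S=S and A=UNIV and B=UNIV] by (simp add: case_prod_unfold)
  hence "((\<lambda>n. \<Sum>m. A m n) has_sum S) UNIV"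
    using has_sum_Sigma'[where f="\<lambda>(n,m). A m n" and a=S and A=UNIV and B="\<lambda>_. UNIV"] colA by auto
  ultimately show "(\<lambda>n. \<Sum>m. A m n) sums (\<Sum>m. a m)" using has_sum_imp_sums by metis
qed


lemma powser_higher_deriv:
  fixes c :: "nat \<Rightarrow> real"
  assumes r: "r > 0" and s: "\<And>x. \<bar>x\<bar> < r \<Longrightarrow> (\<lambda>n. c n * x^n) sums f x"
  shows "(deriv ^^ k) f 0 = fact k * c k"
  using s
proof (induction k arbitrary: c f)
  case 0
  have "(\<lambda>n. c n * 0^n) sums f 0" using 0[of 0] r by simp
  moreover have "(\<lambda>n. c n * 0^n) sums c 0" using powser_sums_zero[of c] by simp
  ultimately show ?case using sums_unique2 by simp
next
  case (Suc k)
  have d: "(\<lambda>n. diffs c n * x^n) sums deriv f x" if x: "\<bar>x\<bar> < r" for x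
  proof -
    have sm: "\<And>z. norm z < r \<Longrightarrow> summable (\<lambda>n. c n * z ^ n)"
      using Suc.prems by (auto simp: sums_iff)
    have "((\<lambda>z. \<Sum>n. c n * z^n) has_field_derivative (\<Sum>n. diffs c n * x^n)) (at x)"
      by (rule termdiffs_strong'[of r]) (use sm x in auto)
    moreover have "\<forall>z\<in>ball 0 r. (\<Sum>n. c n * z^n) = f z"
      using Suc.prems by (auto simp: sums_iff)
    ultimately have "(f has_field_derivative (\<Sum>n. diffs c n * x^n)) (at x)"
      using has_field_derivative_transform_within_open[where S="ball 0 r" and g=f] x by simp
    hence "deriv f x = (\<Sum>n. diffs c n * x^n)" by (rule DERIV_imp_deriv)
    moreover have "summable (\<lambda>n. diffs c n * x^n)"
      by (rule termdiff_converges[of x r]) (use sm x in auto)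
    ultimately show ?thesis by (simp add: sums_iff)
  qed
  have "(deriv ^^ Suc k) f 0 = (deriv ^^ k) (deriv f) 0" by (simp add: funpow_Suc_right del: funpow.simps)
  also have "\<dots> = fact k * diffs c k" by (rule Suc.IH) (use d in auto)
  also have "\<dots> = fact (Suc k) * c (Suc k)" by (simp add: diffs_def)
  finally show ?case .
qed

lemma powser_unique:
  fixes c d :: "nat \<Rightarrow> real"
  assumes r: "r > 0" and "\<And>x. \<bar>x\<bar> < r \<Longrightarrow> (\<lambda>n. c n * x^n) sums f x"
    and "\<And>x. \<bar>x\<bar> < r \<Longrightarrow> (\<lambda>n. d n * x^n) sums f x"
  shows "c k = d k"
  using powser_higher_deriv[OF assms(1,2), of k] powser_higher_deriv[OF assms(1,3), of k]
  by simp


lemma poch_nonneg: "(c::real) \<ge> 0 \<Longrightarrow> pochhammer c n \<ge> 0"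
  by (simp add: pochhammer_prod prod_nonneg)

lemma bin_poch:
  fixes c u :: real
  assumes "\<bar>u\<bar> < 1"
  shows "(\<lambda>n. pochhammer c n / fact n * u^n) sums (1 - u) powr (-c)"
proof -
  have "(\<lambda>n. ((-c) gchoose n) * (-u)^n) sums (1 + (-u)) powr (-c)"
    by (rule gen_binomial_real) (use assms in auto)
  moreover have "((-c) gchoose n) * (-u)^n = pochhammer c n / fact n * u^n" for n
  proof -
    have "((-c) gchoose n) * (-u)^n = ((-1)^n * (-1)^n) * (pochhammer c n / fact n * u^n)"
      by (simp add: gbinomial_pochhammer power_minus[of u] algebra_simps)
    also have "(-1::real)^n * (-1)^n = 1" by (simp flip: power_mult_distrib)
    finally show ?thesis by simp
  qed
  ultimately show ?thesis by simp
qed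

lemma gchoose_abs_le:
  fixes c :: real
  assumes "c \<ge> 0"
  shows "\<bar>c gchoose n\<bar> \<le> pochhammer c n / fact n"
proof -
  have "\<bar>c gchoose n\<bar> = \<bar>\<Prod>i = 0..<n. c - of_nat i\<bar> / fact n"
    by (simp add: gbinomial_prod_rev)
  also have "\<bar>\<Prod>i = 0..<n. c - of_nat i\<bar> = (\<Prod>i = 0..<n. \<bar>c - of_nat i\<bar>)"
    by (rule abs_prod)
  also have "\<dots> \<le> (\<Prod>i = 0..<n. c + of_nat i)"
    by (rule prod_mono) (use assms in auto)
  finally show ?thesis by (simp add: pochhammer_prod divide_right_mono)
qed


definition gg :: "real \<Rightarrow> real \<Rightarrow> real \<Rightarrow> real" where
  "gg \<alpha> lam u = (1 - u) powr \<alpha> / (lam + (1 - u) powr \<alpha>)"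

lemma powr_mult_nat: "(x::real) > 0 \<Longrightarrow> x powr (c * real s) = (x powr c) ^ s"
  by (simp add: powr_powr[symmetric] powr_realpow)

lemma inv_powr_neg: "(x::real) > 0 \<Longrightarrow> y > 0 \<Longrightarrow> (x / y) powr (-a) = (y / x) powr a"
  by (simp add: powr_minus powr_divide)

lemma small_case:
  fixes \<alpha> lam a :: real
  assumes \<alpha>: "0 < \<alpha>" "\<alpha> \<le> 1" and lam: "0 < lam" "lam < 1" and a: "a \<ge> 0"
  defines "\<rho> \<equiv> 1 - ((1 + lam) / 2) powr (1 / \<alpha>)"
  shows "\<rho> > 0" "\<And>n. summable (\<lambda>s. \<bar>Eterm_small \<alpha> a lam n s\<bar>)"
    "\<And>u. \<bar>u\<bar> < \<rho> \<Longrightarrow> (\<lambda>n. Ecoef \<alpha> a lam n * u^n) sums (gg \<alpha> lam u powr a)"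
proof -
  have h1: "(1 + lam) / 2 < 1" "(1 + lam) / 2 > 0" using lam by auto
  have "((1 + lam) / 2) powr (1 / \<alpha>) < 1"
    using powr_less_mono2[of "1/\<alpha>" "(1 + lam) / 2" 1] h1 \<alpha> by auto
  thus \<rho>: "\<rho> > 0" by (simp add: \<rho>_def)
  have \<rho>1: "\<rho> < 1" using h1 by (simp add: \<rho>_def)
  have core: "(\<lambda>n. \<Sum>s. Eterm_small \<alpha> a lam n s / fact n * u^n) sums (gg \<alpha> lam u powr a)
      \<and> (\<forall>n. summable (\<lambda>s. \<bar>Eterm_small \<alpha> a lam n s / fact n * u^n\<bar>))"
    if u: "\<bar>u\<bar> < \<rho>" for u
  proof -
    have u1: "0 < 1 - \<bar>u\<bar>" "1 - \<bar>u\<bar> \<le> 1 - u" "0 < 1 - u" "\<bar>u\<bar> < 1" using u \<rho>1 by auto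
    have "((1 + lam) / 2) powr (1 / \<alpha>) < 1 - \<bar>u\<bar>" using u by (simp add: \<rho>_def)
    hence "(((1 + lam) / 2) powr (1 / \<alpha>)) powr \<alpha> < (1 - \<bar>u\<bar>) powr \<alpha>"
      using \<alpha> by (intro powr_less_mono2) auto
    hence W0: "(1 + lam) / 2 < (1 - \<bar>u\<bar>) powr \<alpha>"
      using \<alpha> h1 by (simp add: powr_powr)
    define q where "q = lam / (1 - \<bar>u\<bar>) powr \<alpha>"
    have Wp: "(1 - \<bar>u\<bar>) powr \<alpha> > 0" using u1 by simp
    have q: "0 \<le> q" "q < 1" using W0 lam Wp unfolding q_def by (auto simp: field_simps)
    define W where "W = (1 - u) powr \<alpha>"
    have W: "W > 0" "(1 - \<bar>u\<bar>) powr \<alpha> \<le> W" unfolding W_def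
      using u1 \<alpha> by (auto intro: powr_mono2)
    define A where "A s n = Eterm_small \<alpha> a lam n s / fact n * u^n" for s n
    define B where "B s n = lam^s * pochhammer a s / fact s * (pochhammer (\<alpha> * real s) n / fact n * \<bar>u\<bar>^n)" for s n
    define aa where "aa s = pochhammer a s / fact s * (-(lam / W))^s" for s
    define bb where "bb s = pochhammer a s / fact s * q^s" for s
    have AB: "\<bar>A s n\<bar> \<le> B s n" for s n
      using poch_nonneg[OF a, of s] poch_nonneg[of "\<alpha> * real s" n] \<alpha> lam
      by (simp add: A_def B_def Eterm_small_def abs_mult power_abs)
    have Bs: "(\<lambda>n. B s n) sums bb s" for s
    proof -
      have "(\<lambda>n. pochhammer (\<alpha> * real s) n / fact n * \<bar>u\<bar>^n) sums (1 - \<bar>u\<bar>) powr (-(\<alpha> * real s))"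
        by (rule bin_poch) (use u1 in auto)
      hence "(\<lambda>n. B s n) sums (lam^s * pochhammer a s / fact s * (1 - \<bar>u\<bar>) powr (-(\<alpha> * real s)))"
        unfolding B_def by (rule sums_mult)
      moreover have "(1 - \<bar>u\<bar>) powr (-(\<alpha> * real s)) = ((1 - \<bar>u\<bar>) powr (-\<alpha>))^s"
        using powr_mult_nat[of "1 - \<bar>u\<bar>" "-\<alpha>" s] u1 by simp
      ultimately show ?thesis using u1
        by (simp add: bb_def q_def powr_minus_divide power_mult_distrib power_divide mult_ac)
    qed
    have bs: "summable bb"
    proof -
      have "(\<lambda>s. pochhammer a s / fact s * q^s) sums (1 - q) powr (-a)"
        by (rule bin_poch) (use q in auto)
      thus ?thesis by (simp add: bb_def[abs_def] sums_iff)
    qed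
    have As: "(\<lambda>n. A s n) sums aa s" for s
    proof -
      have "(\<lambda>n. pochhammer (\<alpha> * real s) n / fact n * u^n) sums (1 - u) powr (-(\<alpha> * real s))"
        by (rule bin_poch) (use u1 in auto)
      hence "(\<lambda>n. (-lam)^s * pochhammer a s / fact s * (pochhammer (\<alpha> * real s) n / fact n * u^n))
         sums ((-lam)^s * pochhammer a s / fact s * (1 - u) powr (-(\<alpha> * real s)))"
        by (rule sums_mult)
      moreover have "(1 - u) powr (-(\<alpha> * real s)) = ((1 - u) powr (-\<alpha>))^s"
        using powr_mult_nat[of "1 - u" "-\<alpha>" s] u1 by simp
      moreover have "(-(lam / W))^s = (-1)^s * lam^s / W^s"
        by (simp add: power_minus[of "lam / W"] power_divide)
      ultimately show ?thesis using u1
        by (simp add: A_def aa_def Eterm_small_def W_def powr_minus_divide power_mult_distrib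
            power_divide power_minus[of "lam"] mult_ac)
    qed
    have sw: "(\<lambda>n. \<Sum>s. A s n) sums (\<Sum>s. aa s)" "\<And>n. summable (\<lambda>s. \<bar>A s n\<bar>)"
      using dswap[OF AB Bs bs As] by auto
    have "aa sums (1 + lam / W) powr (-a)"
    proof -
      have "lam / W \<le> q" unfolding q_def using W lam u1
        by (intro divide_left_mono) auto
      hence "lam \<le> q * W" using W by (simp add: divide_le_eq)
      moreover have "q * W < 1 * W" using q W by (intro mult_strict_right_mono) auto
      ultimately have "lam < W" by linarith
      hence "lam / W < 1" using W by simp
      hence "(\<lambda>s. pochhammer a s / fact s * (-(lam / W))^s) sums (1 - (-(lam / W))) powr (-a)"
        using q W lam by (intro bin_poch) auto
      thus ?thesis by (simp add: aa_def[abs_def])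
    qed
    moreover have "(1 + lam / W) powr (-a) = gg \<alpha> lam u powr a"
    proof -
      have "1 + lam / W = (lam + W) / W" using W by (simp add: field_simps)
      thus ?thesis using W lam inv_powr_neg[of "lam + W" W a] by (simp add: gg_def W_def[symmetric])
    qed
    ultimately have "(\<lambda>n. \<Sum>s. A s n) sums (gg \<alpha> lam u powr a)"
      using sw(1) sums_unique by metis
    with sw(2) show ?thesis unfolding A_def by auto
  qed
  show sm: "summable (\<lambda>s. \<bar>Eterm_small \<alpha> a lam n s\<bar>)" for n
  proof -
    have "summable (\<lambda>s. \<bar>Eterm_small \<alpha> a lam n s / fact n * (\<rho>/2)^n\<bar>)"
      using core[of "\<rho>/2"] \<rho> by auto
    hence "summable (\<lambda>s. \<bar>Eterm_small \<alpha> a lam n s / fact n * (\<rho>/2)^n\<bar> * (fact n / (\<rho>/2)^n))"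
      by (rule summable_mult2)
    moreover have "\<bar>Eterm_small \<alpha> a lam n s / fact n * (\<rho>/2)^n\<bar> * (fact n / (\<rho>/2)^n)
        = \<bar>Eterm_small \<alpha> a lam n s\<bar>" for s
      using \<rho> by (simp add: abs_mult)
    ultimately show ?thesis by (simp only:)
  qed
  fix u assume u: "\<bar>u\<bar> < \<rho>"
  have "(\<Sum>s. Eterm_small \<alpha> a lam n s / fact n * u^n) = Ecoef \<alpha> a lam n * u^n" for n
  proof -
    have "summable (\<lambda>s. Eterm_small \<alpha> a lam n s)"
      using sm[of n] summable_rabs_cancel by blast
    hence "(\<Sum>s. Eterm_small \<alpha> a lam n s / fact n * u^n) = (\<Sum>s. Eterm_small \<alpha> a lam n s) / fact n * u^n"
      by (subst suminf_mult2[symmetric]) (auto intro!: summable_divide simp: suminf_divide[symmetric])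
    thus ?thesis using lam by (simp add: Ecoef_def)
  qed
  thus "(\<lambda>n. Ecoef \<alpha> a lam n * u^n) sums (gg \<alpha> lam u powr a)"
    using core[OF u] by simp
qed


lemma large_case:
  fixes \<alpha> lam a :: real
  assumes \<alpha>: "0 < \<alpha>" "\<alpha> \<le> 1" and lam: "1 < lam" and a: "a \<ge> 0"
  defines "\<rho> \<equiv> 1 - ((1 + 1 / lam) / 2) powr (1 / \<alpha>)"
  shows "\<rho> > 0" "\<And>n. summable (\<lambda>s. \<bar>Eterm_large \<alpha> a lam n s\<bar>)"
    "\<And>u. \<bar>u\<bar> < \<rho> \<Longrightarrow> (\<lambda>n. Ecoef \<alpha> a lam n * u^n) sums (gg \<alpha> lam u powr a)"
proof -
  have h1: "(1 + 1 / lam) / 2 < 1" "(1 + 1 / lam) / 2 > 0" "1 / lam < (1 + 1 / lam) / 2"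
    using lam by (auto simp: field_simps)
  have "((1 + 1 / lam) / 2) powr (1 / \<alpha>) < 1"
    using powr_less_mono2[of "1/\<alpha>" "(1 + 1 / lam) / 2" 1] h1 \<alpha> by auto
  thus \<rho>: "\<rho> > 0" by (simp add: \<rho>_def)
  have \<rho>1: "\<rho> < 1" using h1 by (simp add: \<rho>_def)
  have core: "(\<lambda>n. \<Sum>s. lam powr (-a) * Eterm_large \<alpha> a lam n s * u^n) sums (gg \<alpha> lam u powr a)
      \<and> (\<forall>n. summable (\<lambda>s. \<bar>lam powr (-a) * Eterm_large \<alpha> a lam n s * u^n\<bar>))"
    if u: "\<bar>u\<bar> < \<rho>" for u
  proof -
    have u1: "0 < 1 - \<bar>u\<bar>" "1 - \<bar>u\<bar> \<le> 1 - u" "0 < 1 - u" "\<bar>u\<bar> < 1" using u \<rho>1 by auto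
    have "((1 + 1 / lam) / 2) powr (1 / \<alpha>) < 1 - \<bar>u\<bar>" using u by (simp add: \<rho>_def)
    hence "(((1 + 1 / lam) / 2) powr (1 / \<alpha>)) powr \<alpha> < (1 - \<bar>u\<bar>) powr \<alpha>"
      using \<alpha> by (intro powr_less_mono2) auto
    hence V0: "(1 + 1 / lam) / 2 < (1 - \<bar>u\<bar>) powr \<alpha>"
      using \<alpha> h1 by (simp add: powr_powr)
    define V where "V = (1 - \<bar>u\<bar>) powr \<alpha>"
    have V: "V > 0" "1 / lam < V" using V0 h1 u1 by (auto simp: V_def)
    define q where "q = 1 / (lam * V)"
    have q: "0 \<le> q" "q < 1" using V lam unfolding q_def by (auto simp: field_simps)
    define W where "W = (1 - u) powr \<alpha>"
    have W0: "W > 0" unfolding W_def using u1 by simp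
    have "W \<le> (1 + \<bar>u\<bar>) powr \<alpha>" unfolding W_def using u1 \<alpha> by (intro powr_mono2) auto
    also have "\<dots> \<le> (1 / (1 - \<bar>u\<bar>)) powr \<alpha>"
    proof (intro powr_mono2)
      have "(1 + \<bar>u\<bar>) * (1 - \<bar>u\<bar>) \<le> 1" by (simp add: algebra_simps)
      thus "1 + \<bar>u\<bar> \<le> 1 / (1 - \<bar>u\<bar>)" using u1 by (simp add: field_simps)
    qed (use \<alpha> in auto)
    also have "\<dots> = 1 / V" using u1 by (simp add: V_def powr_divide)
    also have "\<dots> < lam" using V lam by (simp add: field_simps)
    finally have Wl: "W < lam" .
    define A where "A s n = lam powr (-a) * Eterm_large \<alpha> a lam n s * u^n" for s n
    define B where "B s n = lam powr (-a) * (1 / lam)^s * pochhammer a s / fact s *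
        (pochhammer (\<alpha> * (real s + a)) n / fact n * \<bar>u\<bar>^n)" for s n
    define aa where "aa s = lam powr (-a) * W powr a * (pochhammer a s / fact s * (-(W / lam))^s)" for s
    define bb where "bb s = lam powr (-a) * V powr (-a) * (pochhammer a s / fact s * q^s)" for s
    have AB: "\<bar>A s n\<bar> \<le> B s n" for s n
    proof -
      have c0: "\<alpha> * (real s + a) \<ge> 0" using \<alpha> a by simp
      have "\<bar>A s n\<bar> = lam powr (-a) * (1 / lam)^s * pochhammer a s / fact s *
          (\<bar>(\<alpha> * (real s + a)) gchoose n\<bar> * \<bar>u\<bar>^n)"
        using poch_nonneg[OF a, of s] lam
        by (simp add: A_def Eterm_large_def abs_mult power_abs)
      also have "\<dots> \<le> B s n" unfolding B_def
        using gchoose_abs_le[OF c0, of n] poch_nonneg[OF a, of s] lam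
        by (intro mult_left_mono mult_right_mono) auto
      finally show ?thesis .
    qed
    have Bs: "(\<lambda>n. B s n) sums bb s" for s
    proof -
      have "(\<lambda>n. pochhammer (\<alpha> * (real s + a)) n / fact n * \<bar>u\<bar>^n) sums (1 - \<bar>u\<bar>) powr (-(\<alpha> * (real s + a)))"
        by (rule bin_poch) (use u1 in auto)
      hence "(\<lambda>n. B s n) sums (lam powr (-a) * (1 / lam)^s * pochhammer a s / fact s * (1 - \<bar>u\<bar>) powr (-(\<alpha> * (real s + a))))"
        unfolding B_def by (rule sums_mult)
      moreover have "(1 - \<bar>u\<bar>) powr (-(\<alpha> * (real s + a))) = (1 / V)^s * V powr (-a)"
      proof -
        have "(1 - \<bar>u\<bar>) powr (-(\<alpha> * (real s + a))) = (1 - \<bar>u\<bar>) powr ((-\<alpha>) * real s) * (1 - \<bar>u\<bar>) powr (-(\<alpha> * a))"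
          by (simp add: powr_add[symmetric] algebra_simps)
        also have "(1 - \<bar>u\<bar>) powr ((-\<alpha>) * real s) = ((1 - \<bar>u\<bar>) powr (-\<alpha>))^s"
          using powr_mult_nat u1 by blast
        also have "(1 - \<bar>u\<bar>) powr (-\<alpha>) = 1 / V" using u1 by (simp add: V_def powr_minus_divide)
        also have "(1 - \<bar>u\<bar>) powr (-(\<alpha> * a)) = V powr (-a)" using u1 by (simp add: V_def powr_powr)
        finally show ?thesis .
      qed
      ultimately show ?thesis
        by (simp add: bb_def q_def power_mult_distrib power_divide mult_ac)
    qed
    have bs: "summable bb"
    proof -
      have "(\<lambda>s. pochhammer a s / fact s * q^s) sums (1 - q) powr (-a)"
        by (rule bin_poch) (use q in auto)
      hence "summable (\<lambda>s. pochhammer a s / fact s * q^s)" by (simp add: sums_iff)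
      thus ?thesis unfolding bb_def[abs_def] by (rule summable_mult)
    qed
    have As: "(\<lambda>n. A s n) sums aa s" for s
    proof -
      have "(\<lambda>n. ((\<alpha> * (real s + a)) gchoose n) * (-u)^n) sums (1 + (-u)) powr (\<alpha> * (real s + a))"
        by (rule gen_binomial_real) (use u1 in auto)
      hence "(\<lambda>n. lam powr (-a) * (-(1 / lam))^s * pochhammer a s / fact s * (((\<alpha> * (real s + a)) gchoose n) * (-u)^n))
         sums (lam powr (-a) * (-(1 / lam))^s * pochhammer a s / fact s * (1 + (-u)) powr (\<alpha> * (real s + a)))"
        by (rule sums_mult)
      moreover have "(1 + (-u)) powr (\<alpha> * (real s + a)) = W^s * W powr a"
      proof -
        have "(1 + (-u)) powr (\<alpha> * (real s + a)) = (1 - u) powr (\<alpha> * real s) * (1 - u) powr (\<alpha> * a)"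
          by (simp add: powr_add[symmetric] algebra_simps)
        also have "(1 - u) powr (\<alpha> * real s) = W^s" using powr_mult_nat u1 W_def by blast
        also have "(1 - u) powr (\<alpha> * a) = W powr a" using u1 by (simp add: W_def powr_powr)
        finally show ?thesis .
      qed
      moreover have "(-(W / lam))^s = (-(1 / lam))^s * W^s"
        by (simp add: power_minus[of "W / lam"] power_minus[of "1 / lam"] power_divide)
      ultimately have "(\<lambda>n. lam powr (-a) * (-(1 / lam))^s * pochhammer a s / fact s * (((\<alpha> * (real s + a)) gchoose n) * (-u)^n))
         sums aa s" by (simp add: aa_def mult_ac)
      moreover have "lam powr (-a) * (-(1 / lam))^s * pochhammer a s / fact s * (((\<alpha> * (real s + a)) gchoose n) * (-u)^n)
        = A s n" for n
        unfolding A_def Eterm_large_def power_minus[of u n] by (simp add: mult_ac)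
      ultimately show ?thesis by simp
    qed
    have sw: "(\<lambda>n. \<Sum>s. A s n) sums (\<Sum>s. aa s)" "\<And>n. summable (\<lambda>s. \<bar>A s n\<bar>)"
      using dswap[OF AB Bs bs As] by auto
    have "aa sums (lam powr (-a) * W powr a * (1 + W / lam) powr (-a))"
    proof -
      have "W / lam < 1" using Wl lam by simp
      hence "(\<lambda>s. pochhammer a s / fact s * (-(W / lam))^s) sums (1 - (-(W / lam))) powr (-a)"
        using W0 lam by (intro bin_poch) auto
      thus ?thesis unfolding aa_def[abs_def] by (intro sums_mult) simp
    qed
    moreover have "lam powr (-a) * W powr a * (1 + W / lam) powr (-a) = gg \<alpha> lam u powr a"
    proof -
      have "1 + W / lam = (lam + W) / lam" using lam by (simp add: field_simps)
      hence "(1 + W / lam) powr (-a) = lam powr a / (lam + W) powr a"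
        using W0 lam inv_powr_neg[of "lam + W" lam a] by (simp add: powr_divide)
      moreover have "lam powr (-a) * lam powr a = 1" using lam by (simp add: powr_add[symmetric])
      ultimately have "lam powr (-a) * W powr a * (1 + W / lam) powr (-a) = W powr a / (lam + W) powr a"
        by (simp add: field_simps)
      thus ?thesis using W0 lam by (simp add: gg_def W_def[symmetric] powr_divide)
    qed
    ultimately have "(\<lambda>n. \<Sum>s. A s n) sums (gg \<alpha> lam u powr a)"
      using sw(1) sums_unique by metis
    with sw(2) show ?thesis unfolding A_def by auto
  qed
  show sm: "summable (\<lambda>s. \<bar>Eterm_large \<alpha> a lam n s\<bar>)" for n
  proof -
    have "summable (\<lambda>s. \<bar>lam powr (-a) * Eterm_large \<alpha> a lam n s * (\<rho>/2)^n\<bar>)"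
      using core[of "\<rho>/2"] \<rho> by auto
    hence "summable (\<lambda>s. \<bar>lam powr (-a) * Eterm_large \<alpha> a lam n s * (\<rho>/2)^n\<bar> * (1 / (lam powr (-a) * (\<rho>/2)^n)))"
      by (rule summable_mult2)
    moreover have "\<bar>lam powr (-a) * Eterm_large \<alpha> a lam n s * (\<rho>/2)^n\<bar> * (1 / (lam powr (-a) * (\<rho>/2)^n))
        = \<bar>Eterm_large \<alpha> a lam n s\<bar>" for s
      using \<rho> lam by (simp add: abs_mult)
    ultimately show ?thesis by (simp only:)
  qed
  fix u assume u: "\<bar>u\<bar> < \<rho>"
  have "(\<Sum>s. lam powr (-a) * Eterm_large \<alpha> a lam n s * u^n) = Ecoef \<alpha> a lam n * u^n" for n
  proof -
    have "summable (\<lambda>s. Eterm_large \<alpha> a lam n s)"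
      using sm[of n] summable_rabs_cancel by blast
    hence "(\<Sum>s. lam powr (-a) * Eterm_large \<alpha> a lam n s * u^n) = lam powr (-a) * (\<Sum>s. Eterm_large \<alpha> a lam n s) * u^n"
      by (subst suminf_mult2[symmetric]) (auto intro!: summable_mult simp: suminf_mult)
    thus ?thesis using lam by (simp add: Ecoef_def)
  qed
  thus "(\<lambda>n. Ecoef \<alpha> a lam n * u^n) sums (gg \<alpha> lam u powr a)"
    using core[OF u] by simp
qed


definition Wc :: "real \<Rightarrow> complex \<Rightarrow> complex" where
  "Wc \<alpha> z = exp (of_real \<alpha> * Ln (1 - z))"

definition Hc :: "real \<Rightarrow> real \<Rightarrow> real \<Rightarrow> complex \<Rightarrow> complex" where
  "Hc \<alpha> lam a z = exp (of_real a * (of_real \<alpha> * Ln (1 - z) - Ln (of_real lam + Wc \<alpha> z)))"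

lemma Re_one_minus: "norm (z::complex) < 1 \<Longrightarrow> Re (1 - z) > 0"
  using abs_Re_le_cmod[of z] by auto

lemma Re_pos_nonpos_Reals: "Re w > 0 \<Longrightarrow> w \<notin> \<real>\<^sub>\<le>\<^sub>0"
  by (auto simp: nonpos_Reals_def)

lemma Re_Wc_pos:
  assumes "0 < \<alpha>" "\<alpha> \<le> 1" "norm z < 1"
  shows "Re (Wc \<alpha> z) > 0"
proof -
  have "\<bar>Im (Ln (1 - z))\<bar> < pi / 2" using Re_Ln_pos_lt_imp Re_one_minus[OF assms(3)] by blast
  hence "\<bar>\<alpha> * Im (Ln (1 - z))\<bar> < pi / 2"
    using assms mult_left_le_one_le[of "\<bar>Im (Ln (1 - z))\<bar>" \<alpha>] by (simp add: abs_mult)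
  hence "cos (\<alpha> * Im (Ln (1 - z))) > 0" by (intro cos_gt_zero_pi) auto
  thus ?thesis by (simp add: Wc_def Re_exp)
qed

lemma Hc_holo:
  assumes "0 < \<alpha>" "\<alpha> \<le> 1" "0 < lam"
  shows "Hc \<alpha> lam a holomorphic_on ball 0 1"
proof -
  have n1: "1 - z \<notin> \<real>\<^sub>\<le>\<^sub>0" if "z \<in> ball 0 1" for z :: complex
    using Re_one_minus[of z] that Re_pos_nonpos_Reals by auto
  have n2: "of_real lam + Wc \<alpha> z \<notin> \<real>\<^sub>\<le>\<^sub>0" if "z \<in> ball 0 1" for z :: complex
    using Re_Wc_pos[of \<alpha> z] assms that by (intro Re_pos_nonpos_Reals) auto
  have hW: "Wc \<alpha> holomorphic_on ball 0 1"
    unfolding Wc_def[abs_def] using n1 by (intro holomorphic_intros) auto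
  show ?thesis
    unfolding Hc_def[abs_def] using n1 n2 hW by (intro holomorphic_intros) auto
qed

lemma Hc_norm:
  assumes "0 < \<alpha>" "\<alpha> \<le> 1" "0 < lam" "a \<ge> 0" "norm z < 1"
  shows "norm (Hc \<alpha> lam a z) \<le> 1"
proof -
  define W where "W = Wc \<alpha> z"
  have W: "Re W > 0" using Re_Wc_pos assms W_def by blast
  have lw: "lam + W \<noteq> 0" using W assms by (auto simp: complex_eq_iff)
  have "Re (of_real \<alpha> * Ln (1 - z)) = ln (norm W)"
    by (simp add: W_def Wc_def)
  moreover have "Re (Ln (of_real lam + W)) = ln (norm (of_real lam + W))"
    using lw by (simp add: Re_Ln)
  moreover have "norm W \<le> norm (of_real lam + W)"
  proof -
    have e1: "(norm W)^2 = Re W ^ 2 + Im W ^ 2" by (simp add: cmod_power2)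
    have e2: "(norm (of_real lam + W))^2 = (lam + Re W) ^ 2 + Im W ^ 2" by (simp add: cmod_power2)
    have "Re W ^ 2 \<le> (lam + Re W) ^ 2" using W assms by (intro power_mono) auto
    hence "(norm W)^2 \<le> (norm (of_real lam + W))^2" using e1 e2 by linarith
    thus ?thesis by (rule power2_le_imp_le) simp
  qed
  moreover have "norm W > 0" using W by auto
  ultimately have "ln (norm W) \<le> ln (norm (of_real lam + W))"
    by (subst ln_le_cancel_iff) auto
  hence "Re (of_real \<alpha> * Ln (1 - z) - Ln (of_real lam + W)) \<le> 0"
    using \<open>Re (of_real \<alpha> * Ln (1 - z)) = ln (norm W)\<close>
      \<open>Re (Ln (of_real lam + W)) = ln (norm (of_real lam + W))\<close> by simp
  hence "a * Re (of_real \<alpha> * Ln (1 - z) - Ln (of_real lam + W)) \<le> 0"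
    using assms by (simp add: mult_nonneg_nonpos)
  thus ?thesis by (simp add: Hc_def W_def[symmetric])
qed

lemma Hc_real:
  assumes "0 < \<alpha>" "0 < lam" "\<bar>u\<bar> < 1"
  shows "Hc \<alpha> lam a (of_real u) = of_real (gg \<alpha> lam u powr a)"
proof -
  have u: "1 - u > 0" using assms by auto
  define W where "W = (1 - u) powr \<alpha>"
  have W: "W > 0" using u by (simp add: W_def)
  have "Ln (1 - of_real u) = of_real (ln (1 - u))" using Ln_of_real[OF u] by simp
  hence L1: "of_real \<alpha> * Ln (1 - of_real u) = of_real (ln W)"
    using u by (simp add: W_def ln_powr)
  hence "Wc \<alpha> (of_real u) = of_real W" using W by (simp add: Wc_def exp_of_real)
  hence "Ln (of_real lam + Wc \<alpha> (of_real u)) = of_real (ln (lam + W))"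
    using Ln_of_real[of "lam + W"] W assms by simp
  hence "Hc \<alpha> lam a (of_real u) = exp (of_real (a * (ln W - ln (lam + W))))"
    by (simp add: Hc_def L1)
  also have "\<dots> = of_real (exp (a * (ln W - ln (lam + W))))" by (rule exp_of_real)
  also have "ln W - ln (lam + W) = ln (gg \<alpha> lam u)"
    using W assms by (simp add: gg_def W_def[symmetric] ln_div)
  also have "gg \<alpha> lam u > 0" using W assms by (simp add: gg_def W_def[symmetric])
  hence "exp (a * ln (gg \<alpha> lam u)) = gg \<alpha> lam u powr a"
    by (simp add: powr_def)
  finally show ?thesis .
qed


lemma Ecoef_props:
  fixes \<alpha> lam a :: real
  assumes \<alpha>: "0 < \<alpha>" "\<alpha> \<le> 1" and lam: "0 < lam" "lam \<noteq> 1" and a: "a \<ge> 0"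
  shows "\<And>u. \<bar>u\<bar> < 1 \<Longrightarrow> (\<lambda>n. Ecoef \<alpha> a lam n * u^n) sums (gg \<alpha> lam u powr a)"
    "\<And>n. \<bar>Ecoef \<alpha> a lam n\<bar> \<le> 1"
    "\<And>n. if lam < 1 then summable (\<lambda>s. \<bar>Eterm_small \<alpha> a lam n s\<bar>)
           else summable (\<lambda>s. \<bar>Eterm_large \<alpha> a lam n s\<bar>)"
proof -
  obtain \<rho> where \<rho>: "\<rho> > 0" "\<And>u. \<bar>u\<bar> < \<rho> \<Longrightarrow> (\<lambda>n. Ecoef \<alpha> a lam n * u^n) sums (gg \<alpha> lam u powr a)"
  proof (cases "lam < 1")
    case True thus ?thesis using small_case[OF \<alpha> lam(1) True a] that by blast
  next
    case False hence l1: "lam > 1" using lam by auto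
    show ?thesis using large_case[OF \<alpha> l1 a] that by blast
  qed
  show "if lam < 1 then summable (\<lambda>s. \<bar>Eterm_small \<alpha> a lam n s\<bar>)
           else summable (\<lambda>s. \<bar>Eterm_large \<alpha> a lam n s\<bar>)" for n
  proof (cases "lam < 1")
    case True thus ?thesis using small_case[OF \<alpha> lam(1) True a] by simp
  next
    case False hence l1: "lam > 1" using lam by auto
    show ?thesis using large_case[OF \<alpha> l1 a] False by simp
  qed
  define dd where "dd n = (deriv ^^ n) (Hc \<alpha> lam a) 0 / fact n" for n
  have holo: "Hc \<alpha> lam a holomorphic_on ball 0 1" using Hc_holo \<alpha> lam by blast
  have hp: "(\<lambda>n. dd n * of_real u ^ n) sums of_real (gg \<alpha> lam u powr a)" if u: "\<bar>u\<bar> < 1" for u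
  proof -
    have "(\<lambda>n. dd n * (of_real u - 0) ^ n) sums Hc \<alpha> lam a (of_real u)"
      unfolding dd_def by (rule holomorphic_power_series[OF holo]) (use u in auto)
    thus ?thesis using Hc_real[OF \<alpha>(1) lam(1) u] by simp
  qed
  have hRe: "(\<lambda>n. Re (dd n) * u ^ n) sums (gg \<alpha> lam u powr a)" if u: "\<bar>u\<bar> < 1" for u
    using sums_Re[OF hp[OF u]] by (simp flip: of_real_power)
  have hIm: "(\<lambda>n. Im (dd n) * u ^ n) sums 0" if u: "\<bar>u\<bar> < 1" for u
    using sums_Im[OF hp[OF u]] by (simp flip: of_real_power)
  have r1: "min \<rho> 1 > 0" using \<rho> by simp
  have eqRe: "Re (dd n) = Ecoef \<alpha> a lam n" for n
    by (rule powser_unique[OF r1, of _ "\<lambda>u. gg \<alpha> lam u powr a"]) (use hRe \<rho> in auto)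
  have eqIm: "Im (dd n) = 0" for n
    using powser_unique[OF r1, of "\<lambda>n. Im (dd n)" "\<lambda>_. 0" "\<lambda>_. 0" n] hIm by auto
  show "(\<lambda>n. Ecoef \<alpha> a lam n * u^n) sums (gg \<alpha> lam u powr a)" if "\<bar>u\<bar> < 1" for u
    using hRe[OF that] eqRe by simp
  show "\<bar>Ecoef \<alpha> a lam n\<bar> \<le> 1" for n
  proof -
    have bd: "norm (dd n) \<le> 1 / r^n" if r: "0 < r" "r < 1" for r
    proof -
      have "norm ((deriv ^^ n) (Hc \<alpha> lam a) 0) \<le> fact n * 1 / r^n"
      proof (rule Cauchy_inequality)
        show "Hc \<alpha> lam a holomorphic_on ball 0 r" using r by (intro holomorphic_on_subset[OF holo]) auto
        show "continuous_on (cball 0 r) (Hc \<alpha> lam a)"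
          using r by (intro continuous_on_subset[OF holomorphic_on_imp_continuous_on[OF holo]]) auto
        show "norm (Hc \<alpha> lam a x) \<le> 1" if "norm (0 - x) = r" for x
          using Hc_norm[OF \<alpha> lam(1) a, of x] that r by simp
      qed (use r in auto)
      thus ?thesis by (simp add: dd_def norm_divide field_simps)
    qed
    have "norm (dd n) \<le> 1"
    proof (rule tendsto_le[of "at_left (1::real)" "\<lambda>r. 1 / r^n" 1 "\<lambda>_. norm (dd n)"])
      show "((\<lambda>r. 1 / r ^ n) \<longlongrightarrow> 1) (at_left (1::real))"
        by (rule tendsto_eq_intros refl)+ auto
      show "eventually (\<lambda>r. norm (dd n) \<le> 1 / r ^ n) (at_left (1::real))"
        using eventually_at_left_real[of 0 1] by (auto elim!: eventually_mono intro: bd)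
    qed auto
    thus ?thesis using abs_Re_le_cmod[of "dd n"] eqRe by simp
  qed
qed


lemma gg_pos: "0 < lam \<Longrightarrow> \<bar>u\<bar> < 1 \<Longrightarrow> gg \<alpha> lam u > 0"
  by (auto simp: gg_def intro!: divide_pos_pos add_pos_pos)

lemma sum_rev_atMost: "(\<Sum>i\<le>n. f i (n - i)) = (\<Sum>j\<le>n. f (n - j) (j::nat))"
  by (rule sum.reindex_bij_witness[where i="\<lambda>i. n - i" and j="\<lambda>i. n - i"]) auto

context
  fixes \<alpha> \<mu> lam :: real
  assumes \<alpha>: "0 < \<alpha>" "\<alpha> \<le> 1" and \<mu>: "0 < \<mu>" and lam: "0 < lam" "lam \<noteq> 1"
begin

definition ee :: "nat \<Rightarrow> nat \<Rightarrow> real" where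
  "ee m n = Ecoef \<alpha> (real m * \<mu>) lam n"

lemma ee_gen: "\<bar>u\<bar> < 1 \<Longrightarrow> (\<lambda>n. ee m n * u^n) sums (gg \<alpha> lam u powr (real m * \<mu>))"
  unfolding ee_def using Ecoef_props(1)[OF \<alpha> lam, of "real m * \<mu>"] \<mu> by simp

lemma ee_bound: "\<bar>ee m n\<bar> \<le> 1"
  unfolding ee_def using Ecoef_props(2)[OF \<alpha> lam, of "real m * \<mu>"] \<mu> by simp

lemma ee_inner: "if lam < 1 then summable (\<lambda>s. \<bar>Eterm_small \<alpha> (real m * \<mu>) lam n s\<bar>)
           else summable (\<lambda>s. \<bar>Eterm_large \<alpha> (real m * \<mu>) lam n s\<bar>)"
  using Ecoef_props(3)[OF \<alpha> lam, of "real m * \<mu>"] \<mu> by simp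

lemma ee_abs_summable: "\<bar>u\<bar> < 1 \<Longrightarrow> summable (\<lambda>n. norm (ee m n * u^n))"
proof -
  assume u: "\<bar>u\<bar> < 1"
  have b: "norm (ee m n * u^n) \<le> \<bar>u\<bar>^n" for n
    using ee_bound[of m n] by (simp add: abs_mult power_abs mult_left_le_one_le)
  show ?thesis by (rule summable_comparison_test'[where g="\<lambda>n. \<bar>u\<bar>^n" and N=0]) (use u b in auto)
qed

lemma ee_zero: "ee 0 n = (if n = 0 then 1 else 0)"
proof -
  have "(\<lambda>n. ee 0 n * u^n) sums 1" if "\<bar>u\<bar> < 1" for u
    using ee_gen[OF that, of 0] gg_pos[OF lam(1) that, of \<alpha>] by (simp add: less_imp_neq[symmetric])
  moreover have "(\<lambda>n. (if n = 0 then 1 else 0) * u^n) sums 1" for u :: real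
  proof -
    have "(\<lambda>n. (if n = 0 then 1 else 0) * u^n) = (\<lambda>r. if r = 0 then (\<lambda>_. 1::real) r else 0)"
      by (rule ext) simp
    thus ?thesis using sums_single[of 0 "\<lambda>_. 1::real"] by simp
  qed
  ultimately show ?thesis
    using powser_unique[of 1 "ee 0" "\<lambda>_. 1" "\<lambda>n. if n = 0 then 1 else 0" n] by auto
qed

lemma ccoef_eq: "ccoef \<alpha> \<mu> lam k = ee 1 k"
proof -
  have "\<And>u. \<bar>u\<bar> < 1 \<Longrightarrow> (\<lambda>n. ee 1 n * u^n) sums gfun \<alpha> \<mu> lam u"
    using ee_gen[of _ 1] by (simp add: gfun_def gg_def)
  from powser_higher_deriv[of 1, OF _ this, of k] show ?thesis
    by (simp add: ccoef_def)
qed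

lemma ee_conv: "ee (Suc m) n = (\<Sum>j\<le>n. ccoef \<alpha> \<mu> lam (n - j) * ee m j)"
proof -
  have "(\<lambda>k. \<Sum>i\<le>k. ee 1 i * ee m (k - i) * u^k) sums (gg \<alpha> lam u powr (real (Suc m) * \<mu>))"
    if u: "\<bar>u\<bar> < 1" for u
  proof -
    have "(\<lambda>k. \<Sum>i\<le>k. (ee 1 i * u^i) * (ee m (k - i) * u^(k - i))) sums
        ((\<Sum>k. ee 1 k * u^k) * (\<Sum>k. ee m k * u^k))"
      by (rule Cauchy_product_sums) (use ee_abs_summable u in auto)
    also have "(\<Sum>k. ee 1 k * u^k) = gg \<alpha> lam u powr \<mu>" using ee_gen[OF u, of 1] by (simp add: sums_iff)
    also have "(\<Sum>k. ee m k * u^k) = gg \<alpha> lam u powr (real m * \<mu>)" using ee_gen[OF u, of m] by (simp add: sums_iff)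
    also have "gg \<alpha> lam u powr \<mu> * gg \<alpha> lam u powr (real m * \<mu>) = gg \<alpha> lam u powr (real (Suc m) * \<mu>)"
      using gg_pos[OF lam(1) u] by (simp add: powr_add[symmetric] algebra_simps)
    also have "(\<lambda>k. \<Sum>i\<le>k. (ee 1 i * u^i) * (ee m (k - i) * u^(k - i))) = (\<lambda>k. \<Sum>i\<le>k. ee 1 i * ee m (k - i) * u^k)"
    proof (intro ext sum.cong refl)
      fix k i :: nat assume "i \<in> {..k}"
      hence "u^i * u^(k-i) = u^k" by (simp flip: power_add)
      thus "(ee 1 i * u^i) * (ee m (k - i) * u^(k - i)) = ee 1 i * ee m (k - i) * u^k"
        by (metis mult.assoc mult.left_commute)
    qed
    finally show ?thesis .
  qed
  hence H1: "(\<lambda>k. (\<Sum>i\<le>k. ee 1 i * ee m (k - i)) * u^k) sums (gg \<alpha> lam u powr (real (Suc m) * \<mu>))"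
    if "\<bar>u\<bar> < 1" for u using that by (simp add: sum_distrib_right del: of_nat_Suc)
  have "ee (Suc m) n = (\<Sum>i\<le>n. ee 1 i * ee m (n - i))"
    by (rule powser_unique[OF zero_less_one ee_gen H1])
  also have "\<dots> = (\<Sum>j\<le>n. ee 1 (n - j) * ee m j)"
    using sum_rev_atMost[of "\<lambda>i j. ee 1 i * ee m j" n] by simp
  finally show ?thesis by (simp add: ccoef_eq)
qed

end


lemma aux4: "(B::real) \<noteq> 0 \<Longrightarrow> D \<noteq> 0 \<Longrightarrow> B * D * (A / B * (C / D)) = C * A"
  by (simp add: field_simps)

lemma beta_int:
  fixes t \<gamma> \<beta> :: real
  assumes t: "t > 0" and g: "\<gamma> > 0" and b: "0 < \<beta>" "\<beta> < 1"
  shows "((\<lambda>s. (t - s) powr (-\<beta>) * s powr (\<gamma> - 1)) has_integral (t powr (\<gamma> - \<beta>) * Beta \<gamma> (1 - \<beta>))) {0..t}"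
proof -
  define G where "G v = v powr (\<gamma> - 1) * (1 - v) powr ((1 - \<beta>) - 1)" for v :: real
  have "(G has_integral Beta \<gamma> (1 - \<beta>)) (cbox 0 1)"
    unfolding G_def using has_integral_Beta_real[of \<gamma> "1 - \<beta>"] g b by simp
  from has_integral_affinity[OF this, of "1 / t" 0] t
  have "((\<lambda>x. G (x / t)) has_integral t * Beta \<gamma> (1 - \<beta>)) ((\<lambda>x. t * x) ` {0..1})"
    by (simp add: field_simps)
  also have "(\<lambda>x. t * x) ` {0..1} = {0..t}" using image_mult_atLeastAtMost[of t 0 1] t by simp
  finally have I: "((\<lambda>x. G (x / t)) has_integral t * Beta \<gamma> (1 - \<beta>)) {0..t}" .
  have J: "((\<lambda>x. t powr (\<gamma> - 1 - \<beta>) * G (x / t)) has_integral t powr (\<gamma> - 1 - \<beta>) * (t * Beta \<gamma> (1 - \<beta>))) {0..t}"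
    by (rule has_integral_mult_right[OF I])
  have V: "t powr (\<gamma> - 1 - \<beta>) * (t * Beta \<gamma> (1 - \<beta>)) = t powr (\<gamma> - \<beta>) * Beta \<gamma> (1 - \<beta>)"
    using t by (simp add: powr_diff powr_add field_simps)
  have E: "t powr (\<gamma> - 1 - \<beta>) * G (s / t) = (t - s) powr (-\<beta>) * s powr (\<gamma> - 1)" if s: "s \<in> {0..t}" for s
  proof -
    have "1 - s / t = (t - s) / t" using t by (simp add: field_simps)
    hence g1: "G (s / t) = (s powr (\<gamma> - 1) / t powr (\<gamma> - 1)) * ((t - s) powr (-\<beta>) / t powr (-\<beta>))"
      using s t by (simp add: G_def powr_divide)
    have g2: "t powr (\<gamma> - 1 - \<beta>) = t powr (\<gamma> - 1) * t powr (-\<beta>)"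
      by (simp add: powr_add[symmetric])
    have g3: "t powr (\<gamma> - 1) \<noteq> 0" "t powr (-\<beta>) \<noteq> 0" using t by auto
    show ?thesis unfolding g1 g2 by (rule aux4[OF g3])
  qed
  show ?thesis
    using has_integral_spike_finite[OF finite.emptyI _ J] E unfolding V by auto
qed


lemma gamma_shift:
  fixes x \<beta> :: real
  assumes x: "x \<ge> 2" and b: "0 < \<beta>" "\<beta> \<le> 1"
  shows "Gamma (x + \<beta>) \<ge> (x - 1) powr \<beta> * Gamma x"
proof -
  define f :: "real \<Rightarrow> real" where "f = ln \<circ> Gamma"
  have cv: "convex_on {0<..} f" unfolding f_def by (rule log_convex_Gamma_real)
  define th where "th = 1 / (1 + \<beta>)"
  have th: "0 \<le> th" "th \<le> 1" using b by (auto simp: th_def)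
  have t1: "th * (1 + \<beta>) = 1" using b by (simp add: th_def)
  have "(1 - th) * (x - 1) + th * (x + \<beta>) = x - 1 + th * (1 + \<beta>)" by (simp add: algebra_simps)
  hence comb: "(1 - th) *\<^sub>R (x - 1) + th *\<^sub>R (x + \<beta>) = x" using t1 by simp
  have "f ((1 - th) *\<^sub>R (x - 1) + th *\<^sub>R (x + \<beta>)) \<le> (1 - th) * f (x - 1) + th * f (x + \<beta>)"
    by (rule convex_onD[OF cv th]) (use x b in auto)
  hence c1: "f x \<le> (1 - th) * f (x - 1) + th * f (x + \<beta>)" using comb by simp
  have "(1 + \<beta>) * f x \<le> \<beta> * f (x - 1) + f (x + \<beta>)"
  proof -
    have "(1 + \<beta>) * f x \<le> (1 + \<beta>) * ((1 - th) * f (x - 1) + th * f (x + \<beta>))"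
      using c1 b by (intro mult_left_mono) auto
    also have "\<dots> = ((1 + \<beta>) * (1 - th)) * f (x - 1) + ((1 + \<beta>) * th) * f (x + \<beta>)"
      by (simp add: algebra_simps)
    also have "(1 + \<beta>) * (1 - th) = \<beta>" using t1 by (simp add: algebra_simps)
    also have "(1 + \<beta>) * th = 1" using t1 by (simp add: algebra_simps)
    finally show ?thesis by simp
  qed
  moreover have g1: "Gamma (x - 1) > 0" "Gamma x > 0" "Gamma (x + \<beta>) > 0"
    using x b by (auto intro!: Gamma_real_pos)
  moreover have "Gamma x = (x - 1) * Gamma (x - 1)"
  proof -
    have "x - 1 \<notin> \<int>\<^sub>\<le>\<^sub>0" using x by (auto simp: nonpos_Ints_def)
    thus ?thesis using Gamma_plus1[of "x - 1"] by simp
  qed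
  hence "f x = ln (x - 1) + f (x - 1)" using x g1(1)
    by (simp add: f_def ln_mult less_imp_neq[symmetric])
  ultimately have "f (x + \<beta>) \<ge> f x + \<beta> * ln (x - 1)" by (simp add: algebra_simps)
  hence "exp (f x + \<beta> * ln (x - 1)) \<le> exp (f (x + \<beta>))" by simp
  thus ?thesis using g1 x by (simp add: f_def exp_add powr_def mult.commute)
qed

lemma ml_summable:
  fixes \<beta> y :: real
  assumes b: "0 < \<beta>" "\<beta> \<le> 1"
  shows "summable (\<lambda>m. \<bar>y\<bar>^m / Gamma (\<beta> * real m + 1))"
proof -
  define M where "M = max 1 ((2 * \<bar>y\<bar> + 1) powr (1 / \<beta>))"
  define N where "N = nat \<lceil>M / \<beta>\<rceil>"
  have step: "\<bar>y\<bar>^Suc m / Gamma (\<beta> * real (Suc m) + 1) \<le> 1/2 * (\<bar>y\<bar>^m / Gamma (\<beta> * real m + 1))"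
    if m: "m \<ge> N" for m
  proof -
    have "real m \<ge> M / \<beta>" using m by (simp add: N_def)
    hence bm: "\<beta> * real m \<ge> M" using b by (simp add: field_simps)
    have M1: "M \<ge> 1" "M \<ge> (2 * \<bar>y\<bar> + 1) powr (1 / \<beta>)" by (auto simp: M_def)
    have "(\<beta> * real m) powr \<beta> \<ge> ((2 * \<bar>y\<bar> + 1) powr (1 / \<beta>)) powr \<beta>"
      using M1 bm b by (intro powr_mono2) auto
    hence P: "(\<beta> * real m) powr \<beta> \<ge> 2 * \<bar>y\<bar> + 1" using b by (simp add: powr_powr)
    have "\<beta> * real m \<ge> 0" using b by simp
    hence G0: "Gamma (\<beta> * real m + 1) > 0" by (intro Gamma_real_pos) linarith
    have GS: "Gamma (\<beta> * real m + 1 + \<beta>) \<ge> (\<beta> * real m + 1 - 1) powr \<beta> * Gamma (\<beta> * real m + 1)"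
      by (rule gamma_shift) (use bm M1 b in auto)
    have "(2 * \<bar>y\<bar> + 1) * Gamma (\<beta> * real m + 1) \<le> (\<beta> * real m) powr \<beta> * Gamma (\<beta> * real m + 1)"
      by (rule mult_right_mono[OF P]) (use G0 in auto)
    also have "\<dots> \<le> Gamma (\<beta> * real m + 1 + \<beta>)" using GS by simp
    also have "\<beta> * real m + 1 + \<beta> = \<beta> * real (Suc m) + 1" by (simp add: algebra_simps)
    finally have G: "Gamma (\<beta> * real (Suc m) + 1) \<ge> (2 * \<bar>y\<bar> + 1) * Gamma (\<beta> * real m + 1)" .
    have "\<bar>y\<bar>^Suc m / Gamma (\<beta> * real (Suc m) + 1) \<le> \<bar>y\<bar>^Suc m / ((2 * \<bar>y\<bar> + 1) * Gamma (\<beta> * real m + 1))"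
    proof (rule divide_left_mono)
      have p: "0 < (2 * \<bar>y\<bar> + 1) * Gamma (\<beta> * real m + 1)" using G0 by simp
      show "0 < Gamma (\<beta> * real (Suc m) + 1) * ((2 * \<bar>y\<bar> + 1) * Gamma (\<beta> * real m + 1))"
      proof (rule mult_pos_pos[OF _ p])
        show "0 < Gamma (\<beta> * real (Suc m) + 1)" using p G by linarith
      qed
    qed (use G in auto)
    also have "\<dots> = (\<bar>y\<bar> / (2 * \<bar>y\<bar> + 1)) * (\<bar>y\<bar>^m / Gamma (\<beta> * real m + 1))"
      by (simp add: field_simps)
    also have "\<dots> \<le> 1/2 * (\<bar>y\<bar>^m / Gamma (\<beta> * real m + 1))"
      using G0 by (intro mult_right_mono) (auto simp: field_simps)
    finally show ?thesis .
  qed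
  have nn: "0 \<le> \<bar>y\<bar>^m / Gamma (\<beta> * real m + 1)" for m
  proof -
    have "\<beta> * real m \<ge> 0" using b by simp
    hence "Gamma (\<beta> * real m + 1) > 0" by (intro Gamma_real_pos) linarith
    thus ?thesis by simp
  qed
  show ?thesis
  proof (rule summable_ratio_test[of "1/2" N])
    fix n assume "N \<le> n"
    from step[OF this] show "norm (\<bar>y\<bar>^Suc n / Gamma (\<beta> * real (Suc n) + 1))
      \<le> 1/2 * norm (\<bar>y\<bar>^n / Gamma (\<beta> * real n + 1))"
      using nn[of n] nn[of "Suc n"] by (simp only: real_norm_def abs_of_nonneg)
  qed simp
qed


context
  fixes \<alpha> \<mu> \<beta> \<xi> lam :: real
  assumes \<alpha>: "0 < \<alpha>" "\<alpha> \<le> 1" and \<mu>: "0 < \<mu>" and \<beta>: "0 < \<beta>" "\<beta> \<le> 1"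
    and \<xi>: "0 < \<xi>" and lam: "0 < lam" "lam \<noteq> 1"
begin

definition KK :: real where "KK = (lam + 1) powr \<mu> * \<xi>"
definition XX :: "real \<Rightarrow> real" where "XX t = -((lam + 1) powr \<mu>) * \<xi> * t powr \<beta>"
definition cf :: "nat \<Rightarrow> nat \<Rightarrow> real" where "cf n m = ee \<alpha> \<mu> lam m n / Gamma (\<beta> * real m + 1)"
definition Phi :: "nat \<Rightarrow> real \<Rightarrow> real" where "Phi n y = (\<Sum>m. cf n m * y^m)"
definition Phi' :: "nat \<Rightarrow> real \<Rightarrow> real" where "Phi' n y = (\<Sum>m. diffs (cf n) m * y^m)"
definition Psi :: "nat \<Rightarrow> real \<Rightarrow> real" where
  "Psi n y = (\<Sum>m. ee \<alpha> \<mu> lam (Suc m) n / Gamma (\<beta> * real m + 1) * y^m)"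

lemma KK_pos: "KK > 0" using lam \<xi> by (simp add: KK_def)

lemma XX_eq: "XX t = - KK * t powr \<beta>" by (simp add: XX_def KK_def)

lemma Gpos: "Gamma (\<beta> * real m + 1) > 0"
proof -
  have "\<beta> * real m \<ge> 0" using \<beta> by simp
  thus ?thesis by (intro Gamma_real_pos) linarith
qed

lemma ee_b: "\<bar>ee \<alpha> \<mu> lam m n\<bar> \<le> 1" using ee_bound[OF \<alpha> \<mu> lam] .

lemma cf_bound: "\<bar>cf n m * y^m\<bar> \<le> \<bar>y\<bar>^m / Gamma (\<beta> * real m + 1)"
proof -
  have "\<bar>cf n m * y^m\<bar> = \<bar>ee \<alpha> \<mu> lam m n\<bar> * (\<bar>y\<bar>^m / Gamma (\<beta> * real m + 1))"
    using Gpos[of m] by (simp add: cf_def abs_mult power_abs)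
  also have "\<dots> \<le> 1 * (\<bar>y\<bar>^m / Gamma (\<beta> * real m + 1))"
    using ee_b Gpos[of m] by (intro mult_right_mono) auto
  finally show ?thesis by simp
qed

lemma cf_summable_abs: "summable (\<lambda>m. \<bar>cf n m * y^m\<bar>)"
proof (rule summable_comparison_test'[where N=0])
  show "summable (\<lambda>m. \<bar>y\<bar>^m / Gamma (\<beta> * real m + 1))" by (rule ml_summable[OF \<beta>])
  show "norm \<bar>cf n m * y^m\<bar> \<le> \<bar>y\<bar>^m / Gamma (\<beta> * real m + 1)" for m
    using cf_bound[of n m y] by simp
qed

lemma cf_summable: "summable (\<lambda>m. cf n m * y^m)"
  by (rule summable_rabs_cancel[OF cf_summable_abs])

lemma abscf_summable: "summable (\<lambda>m. \<bar>cf n m\<bar> * y^m)"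
proof -
  have "summable (\<lambda>m. \<bar>\<bar>cf n m\<bar> * y^m\<bar>)"
    using cf_summable_abs[of n y] by (simp add: abs_mult)
  thus ?thesis by (rule summable_rabs_cancel)
qed

lemma diffs_abs_summable: "summable (\<lambda>m. \<bar>diffs (cf n) m\<bar> * r^m)"
proof -
  have "summable (\<lambda>m. diffs (\<lambda>m. \<bar>cf n m\<bar>) m * r^m)"
    by (rule termdiff_converges_all) (rule abscf_summable)
  moreover have "diffs (\<lambda>m. \<bar>cf n m\<bar>) m = \<bar>diffs (cf n) m\<bar>" for m
    by (simp add: diffs_def abs_mult)
  ultimately show ?thesis by simp
qed

lemma Phi_deriv: "(Phi n has_real_derivative Phi' n y) (at y)"
  unfolding Phi_def[abs_def] Phi'_def
  by (rule termdiffs_strong_converges_everywhere) (rule cf_summable)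

lemma Phi_cont: "continuous_on UNIV (Phi n)"
  by (intro continuous_at_imp_continuous_on ballI DERIV_isCont[OF Phi_deriv])

lemma pterm_eq: "pterm \<alpha> \<mu> \<beta> \<xi> lam n t = (\<lambda>m. cf n m * XX t ^ m)"
  by (rule ext) (simp add: pterm_def cf_def XX_def ee_def[OF \<alpha> \<mu> lam])

lemma psol_eq: "psol \<alpha> \<mu> \<beta> \<xi> lam n t = Phi n (XX t)"
  by (simp add: psol_def pterm_eq Phi_def)

lemma psol_fun: "psol \<alpha> \<mu> \<beta> \<xi> lam n = (\<lambda>t. Phi n (XX t))"
  by (rule ext) (rule psol_eq)

lemma pterm_summable: "summable (pterm \<alpha> \<mu> \<beta> \<xi> lam n t)"
  by (simp add: pterm_eq cf_summable)

lemma XX_cont: "continuous_on {0..} XX"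
proof -
  have "continuous_on {0..} (\<lambda>t::real. t powr \<beta>)"
    by (rule continuous_on_powr') (use \<beta> in \<open>auto intro: continuous_intros\<close>)
  thus ?thesis unfolding XX_def[abs_def] by (rule continuous_on_mult_left)
qed

lemma psol_cont: "continuous_on {0..} (psol \<alpha> \<mu> \<beta> \<xi> lam n)"
  unfolding psol_fun by (rule continuous_on_compose2[OF Phi_cont XX_cont]) auto

lemma psol_zero: "psol \<alpha> \<mu> \<beta> \<xi> lam n 0 = (if n = 0 then 1 else 0)"
proof -
  have "XX 0 = 0" by (simp add: XX_def)
  hence "psol \<alpha> \<mu> \<beta> \<xi> lam n 0 = cf n 0" by (simp add: psol_eq Phi_def)
  also have "\<dots> = (if n = 0 then 1 else 0)"
    by (simp add: cf_def ee_zero[OF \<alpha> \<mu> lam])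
  finally show ?thesis .
qed

lemma Psi_conv: "Psi n y = (\<Sum>j\<le>n. ccoef \<alpha> \<mu> lam (n - j) * Phi j y)"
proof -
  have "ee \<alpha> \<mu> lam (Suc m) n / Gamma (\<beta> * real m + 1) * y^m
      = (\<Sum>j\<le>n. ccoef \<alpha> \<mu> lam (n - j) * (cf j m * y^m))" for m
    unfolding ee_conv[OF \<alpha> \<mu> lam] sum_divide_distrib sum_distrib_right
    by (intro sum.cong refl) (simp add: cf_def)
  hence "Psi n y = (\<Sum>m. \<Sum>j\<le>n. ccoef \<alpha> \<mu> lam (n - j) * (cf j m * y^m))"
    unfolding Psi_def by simp
  also have "\<dots> = (\<Sum>j\<le>n. \<Sum>m. ccoef \<alpha> \<mu> lam (n - j) * (cf j m * y^m))"
    by (rule suminf_sum) (intro summable_mult cf_summable)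
  also have "\<dots> = (\<Sum>j\<le>n. ccoef \<alpha> \<mu> lam (n - j) * Phi j y)"
    by (intro sum.cong refl) (simp add: Phi_def suminf_mult cf_summable)
  finally show ?thesis .
qed

lemma target_eq:
  "- \<xi> * (lam + 1) powr \<mu> * (\<Sum>m\<le>n. ccoef \<alpha> \<mu> lam (n - m) * psol \<alpha> \<mu> \<beta> \<xi> lam m t)
    = - KK * Psi n (XX t)"
  by (simp add: Psi_conv psol_eq KK_def)

lemma XX_deriv: "t > 0 \<Longrightarrow> (XX has_real_derivative (- KK * (\<beta> * t powr (\<beta> - 1)))) (at t)"
  unfolding XX_eq[abs_def] by (intro derivative_eq_intros has_real_derivative_powr) auto

lemma psol_deriv: "t > 0 \<Longrightarrow> (psol \<alpha> \<mu> \<beta> \<xi> lam n has_real_derivative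
     Phi' n (XX t) * (- KK * (\<beta> * t powr (\<beta> - 1)))) (at t)"
  unfolding psol_fun by (rule DERIV_chain2[OF Phi_deriv XX_deriv])

end


lemma F6_alg:
  fixes S E G Q P R k \<beta> \<gamma> :: real
  assumes "\<gamma> \<noteq> 0" "G \<noteq> 0" "Q \<noteq> 0" "S * \<beta> = \<gamma>"
  shows "S * (E / (\<gamma> * G)) * (k * k^m) * \<beta> * (P * (G * R / Q)) = R * k * (E / Q * (k^m * P))"
proof -
  have "S * (E / (\<gamma> * G)) * (k * k^m) * \<beta> * (P * (G * R / Q)) = (S * \<beta>) * (E / (\<gamma> * G)) * (k * k^m) * (P * (G * R / Q))"
    by (simp add: mult_ac)
  also have "\<dots> = R * k * (E / Q * (k^m * P))" using assms by (simp add: field_simps)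
  finally show ?thesis .
qed

lemma cancel_aux: "(x::real) + 1 \<noteq> 0 \<Longrightarrow> (x + 1) * (a / ((x + 1) * y)) = a / y"
  by simp

context
  fixes \<alpha> \<mu> \<beta> \<xi> lam :: real
  assumes \<alpha>: "0 < \<alpha>" "\<alpha> \<le> 1" and \<mu>: "0 < \<mu>" and \<beta>: "0 < \<beta>" "\<beta> \<le> 1"
    and \<xi>: "0 < \<xi>" and lam: "0 < lam" "lam \<noteq> 1"
begin

abbreviation "K \<equiv> KK \<mu> \<xi> lam"
abbreviation "X \<equiv> XX \<mu> \<beta> \<xi> lam"
abbreviation "c \<equiv> cf \<alpha> \<mu> \<beta> lam"
abbreviation "Ph \<equiv> Phi \<alpha> \<mu> \<beta> lam"
abbreviation "Ph' \<equiv> Phi' \<alpha> \<mu> \<beta> lam"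
abbreviation "Ps \<equiv> Psi \<alpha> \<mu> \<beta> lam"
abbreviation "e \<equiv> ee \<alpha> \<mu> lam"
abbreviation "p \<equiv> psol \<alpha> \<mu> \<beta> \<xi> lam"

lemmas A = \<alpha> \<mu> \<beta> \<xi> lam
lemmas XXe = XX_eq[OF A] and cfd = cf_def[OF A] and Phd = Phi_def[OF A] and Phd' = Phi'_def[OF A]
  and Psd = Psi_def[OF A] and Kp = KK_pos[OF A] and Gp = Gpos[OF A]
  and eb = ee_b[OF A] and cfs = cf_summable[OF A] and das = diffs_abs_summable[OF A]
  and pder = psol_deriv[OF A] and pfun = psol_fun[OF A] and pcont = psol_cont[OF A]

lemma Psi_summable: "summable (\<lambda>m. e (Suc m) n / Gamma (\<beta> * real m + 1) * y^m)"
proof -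
  have "summable (\<lambda>m. \<bar>e (Suc m) n / Gamma (\<beta> * real m + 1) * y^m\<bar>)"
  proof (rule summable_comparison_test'[where N=0])
    show "summable (\<lambda>m. \<bar>y\<bar>^m / Gamma (\<beta> * real m + 1))" by (rule ml_summable[OF \<beta>])
    show "norm \<bar>e (Suc m) n / Gamma (\<beta> * real m + 1) * y^m\<bar> \<le> \<bar>y\<bar>^m / Gamma (\<beta> * real m + 1)" for m
    proof -
      have "norm \<bar>e (Suc m) n / Gamma (\<beta> * real m + 1) * y^m\<bar>
          = \<bar>e (Suc m) n\<bar> * (\<bar>y\<bar>^m / Gamma (\<beta> * real m + 1))"
        using Gp[of m] by (simp add: abs_mult power_abs)
      also have "\<dots> \<le> 1 * (\<bar>y\<bar>^m / Gamma (\<beta> * real m + 1))"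
        using eb Gp[of m] by (intro mult_right_mono) auto
      finally show ?thesis by simp
    qed
  qed
  thus ?thesis by (rule summable_rabs_cancel)
qed

lemma caputo_one:
  assumes b1: "\<beta> = 1" and t: "t > 0"
  shows "has_caputo_deriv \<beta> (p n) (- K * Ps n (X t)) t"
proof -
  have "Ph' n y = Ps n y" for y
  proof -
    have "diffs (c n) m = e (Suc m) n / Gamma (\<beta> * real m + 1)" for m
    proof -
      have "real m + 1 \<notin> \<int>\<^sub>\<le>\<^sub>0" by (auto simp: nonpos_Ints_def)
      hence "Gamma (real m + 1 + 1) = (real m + 1) * Gamma (real m + 1)" by (rule Gamma_plus1)
      note G2 = this
      have G1: "Gamma (real m + 1) > 0" by (intro Gamma_real_pos) simp
      have "diffs (c n) m = real (Suc m) * (e (Suc m) n / Gamma (\<beta> * real (Suc m) + 1))"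
        by (simp add: diffs_def cfd)
      also have "\<beta> * real (Suc m) + 1 = real m + 1 + 1" using b1 by simp
      also have "real (Suc m) * (e (Suc m) n / Gamma (real m + 1 + 1)) = e (Suc m) n / Gamma (real m + 1)"
      proof -
        have "real (Suc m) = real m + 1" by simp
        thus ?thesis unfolding G2 by (simp only: cancel_aux)
      qed
      also have "real m + 1 = \<beta> * real m + 1" using b1 by simp
      finally show ?thesis .
    qed
    thus ?thesis by (simp add: Phd' Psd)
  qed
  thus ?thesis using pder[OF t, of n] b1 t by (simp add: has_caputo_deriv_def mult.commute)
qed

lemma caputo_lt:
  assumes b1: "\<beta> < 1" and t: "t > 0"
  shows "has_caputo_deriv \<beta> (p n) (- K * Ps n (X t)) t"
proof -
  define a where "a m = diffs (c n) m * (-K)^(Suc m) * \<beta>" for m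
  define \<gamma> where "\<gamma> m = \<beta> * real (Suc m)" for m
  define T where "T m s = a m * s powr (\<gamma> m - 1)" for m s
  define Dser where "Dser s = (\<Sum>m. T m s)" for s
  have \<gamma>pos: "\<gamma> m > 0" for m using \<beta> by (simp add: \<gamma>_def)
  have dsum: "summable (\<lambda>m. diffs (c n) m * y^m)" for y
    by (rule termdiff_converges_all) (rule cfs)
  have F1: "Ph' n (X s) * (- K * (\<beta> * s powr (\<beta> - 1))) = Dser s" if s: "s > 0" for s
  proof -
    have "Ph' n (X s) * (- K * (\<beta> * s powr (\<beta> - 1))) =
        (\<Sum>m. diffs (c n) m * X s ^ m * (- K * (\<beta> * s powr (\<beta> - 1))))"
      unfolding Phd' by (rule suminf_mult2) (rule dsum)
    also have "\<dots> = Dser s" unfolding Dser_def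
    proof (rule suminf_cong)
      fix m
      have "X s ^ m = ((-K) * s powr \<beta>)^m" by (simp add: XXe)
      also have "\<dots> = (-K)^m * (s powr \<beta>)^m" by (rule power_mult_distrib)
      also have "(s powr \<beta>)^m = s powr (\<beta> * real m)" using powr_mult_nat[of s \<beta> m] s by simp
      finally have "X s ^ m = (-K)^m * s powr (\<beta> * real m)" .
      moreover have "s powr (\<beta> * real m) * s powr (\<beta> - 1) = s powr (\<gamma> m - 1)"
        by (simp add: \<gamma>_def powr_add[symmetric] algebra_simps)
      ultimately show "diffs (c n) m * X s ^ m * (- K * (\<beta> * s powr (\<beta> - 1))) = T m s"
        by (simp add: T_def a_def mult_ac flip: \<open>s powr (\<beta> * real m) * s powr (\<beta> - 1) = s powr (\<gamma> m - 1)\<close>)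
    qed
    finally show ?thesis .
  qed
  have F2: "\<bar>T m s\<bar> \<le> \<bar>a m\<bar> * (t powr \<beta>)^m * s powr (\<beta> - 1)" if s: "0 \<le> s" "s \<le> t" for m s
  proof (cases "s = 0")
    case True thus ?thesis by (simp add: T_def)
  next
    case False hence s0: "s > 0" using s by simp
    have "\<gamma> m - 1 = \<beta> * real m + (\<beta> - 1)" by (simp add: \<gamma>_def algebra_simps)
    hence "s powr (\<gamma> m - 1) = s powr (\<beta> * real m) * s powr (\<beta> - 1)"
      by (simp only: powr_add)
    hence "s powr (\<gamma> m - 1) = (s powr \<beta>)^m * s powr (\<beta> - 1)"
      using powr_mult_nat[of s \<beta> m] s0 by simp
    moreover have "(s powr \<beta>)^m \<le> (t powr \<beta>)^m"
      using s \<beta> by (intro power_mono powr_mono2) auto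
    ultimately have "s powr (\<gamma> m - 1) \<le> (t powr \<beta>)^m * s powr (\<beta> - 1)"
      using s0 by (simp add: mult_right_mono)
    thus ?thesis using s0 by (simp add: T_def abs_mult mult_left_mono mult.assoc)
  qed
  have F3: "summable (\<lambda>m. \<bar>a m\<bar> * (t powr \<beta>)^m)"
  proof -
    have "summable (\<lambda>m. \<beta> * K * (\<bar>diffs (c n) m\<bar> * (K * t powr \<beta>)^m))"
      by (intro summable_mult das)
    moreover have "\<beta> * K * (\<bar>diffs (c n) m\<bar> * (K * t powr \<beta>)^m) = \<bar>a m\<bar> * (t powr \<beta>)^m" for m
      using Kp \<beta> by (simp add: a_def abs_mult power_abs power_mult_distrib)
    ultimately show ?thesis by simp
  qed
  define C where "C = (\<Sum>m. \<bar>a m\<bar> * (t powr \<beta>)^m)"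
  have F4s: "summable (\<lambda>m. T m s)" if s: "0 \<le> s" "s \<le> t" for s
  proof -
    have "summable (\<lambda>m. \<bar>a m\<bar> * (t powr \<beta>)^m * s powr (\<beta> - 1))"
      by (rule summable_mult2[OF F3])
    hence "summable (\<lambda>m. \<bar>T m s\<bar>)"
      by (rule summable_comparison_test'[where N=0]) (use F2[OF s] in simp)
    thus ?thesis by (rule summable_rabs_cancel)
  qed
  have F4b: "\<bar>\<Sum>m<N. T m s\<bar> \<le> C * s powr (\<beta> - 1)" if s: "0 \<le> s" "s \<le> t" for s N
  proof -
    have "\<bar>\<Sum>m<N. T m s\<bar> \<le> (\<Sum>m<N. \<bar>T m s\<bar>)" by (rule sum_abs)
    also have "\<dots> \<le> (\<Sum>m<N. \<bar>a m\<bar> * (t powr \<beta>)^m * s powr (\<beta> - 1))"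
      by (intro sum_mono F2 s)
    also have "\<dots> = (\<Sum>m<N. \<bar>a m\<bar> * (t powr \<beta>)^m) * s powr (\<beta> - 1)"
      by (simp add: sum_distrib_right)
    also have "(\<Sum>m<N. \<bar>a m\<bar> * (t powr \<beta>)^m) \<le> C"
      unfolding C_def by (intro sum_le_suminf F3) auto
    hence "(\<Sum>m<N. \<bar>a m\<bar> * (t powr \<beta>)^m) * s powr (\<beta> - 1) \<le> C * s powr (\<beta> - 1)"
      by (intro mult_right_mono) auto
    finally show ?thesis .
  qed
  define v where "v m = a m * (t powr (\<gamma> m - \<beta>) * Beta (\<gamma> m) (1 - \<beta>))" for m
  have F5: "((\<lambda>s. (t - s) powr (-\<beta>) * T m s) has_integral v m) {0..t}" for m
  proof -
    have "((\<lambda>s. a m * ((t - s) powr (-\<beta>) * s powr (\<gamma> m - 1))) has_integral v m) {0..t}"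
      unfolding v_def by (rule has_integral_mult_right[OF beta_int[OF t \<gamma>pos \<beta>(1) b1]])
    thus ?thesis by (simp add: T_def mult_ac)
  qed
  have G1b: "Gamma (1 - \<beta>) > 0" using b1 by (intro Gamma_real_pos) simp
  have F6: "v m = Gamma (1 - \<beta>) * (- K) * (e (Suc m) n / Gamma (\<beta> * real m + 1) * X t ^ m)" for m
  proof -
    have d1: "diffs (c n) m = real (Suc m) * (e (Suc m) n / Gamma (\<gamma> m + 1))"
      by (simp add: diffs_def cfd \<gamma>_def)
    have "\<gamma> m \<notin> \<int>\<^sub>\<le>\<^sub>0" using \<gamma>pos[of m] by (auto simp: nonpos_Ints_def)
    hence d2: "Gamma (\<gamma> m + 1) = \<gamma> m * Gamma (\<gamma> m)" by (rule Gamma_plus1)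
    have "\<gamma> m + (1 - \<beta>) = \<beta> * real m + 1" by (simp add: \<gamma>_def algebra_simps)
    hence d3: "Beta (\<gamma> m) (1 - \<beta>) = Gamma (\<gamma> m) * Gamma (1 - \<beta>) / Gamma (\<beta> * real m + 1)"
      by (simp only: Beta_def)
    have "\<gamma> m - \<beta> = \<beta> * real m" by (simp add: \<gamma>_def algebra_simps)
    hence d4: "t powr (\<gamma> m - \<beta>) = (t powr \<beta>)^m" using powr_mult_nat[of t \<beta> m] t by simp
    have "X t ^ m = ((-K) * t powr \<beta>)^m" by (simp add: XXe)
    also have "\<dots> = (-K)^m * (t powr \<beta>)^m" by (rule power_mult_distrib)
    finally have d5: "X t ^ m = (-K)^m * (t powr \<beta>)^m" .
    have d6: "real (Suc m) * \<beta> = \<gamma> m" by (simp add: \<gamma>_def)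
    have gg0: "Gamma (\<gamma> m) > 0" by (rule Gamma_real_pos[OF \<gamma>pos[of m]])
    have nz: "\<gamma> m \<noteq> 0" "Gamma (\<gamma> m) \<noteq> 0" "Gamma (\<beta> * real m + 1) \<noteq> 0"
      using dual_order.strict_implies_not_eq[OF \<gamma>pos[of m]] dual_order.strict_implies_not_eq[OF gg0] dual_order.strict_implies_not_eq[OF Gp[of m]] by auto
    show ?thesis unfolding v_def a_def d1 d2 d3 d4 d5 power_Suc
      by (rule F6_alg[OF nz d6])
  qed
  have F7: "(\<lambda>N. \<Sum>m<N. v m) \<longlonglongrightarrow> Gamma (1 - \<beta>) * (- K) * Ps n (X t)"
  proof -
    have "(\<lambda>m. Gamma (1 - \<beta>) * (- K) * (e (Suc m) n / Gamma (\<beta> * real m + 1) * X t ^ m)) sums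
        (Gamma (1 - \<beta>) * (- K) * Ps n (X t))"
      unfolding Psd by (intro sums_mult summable_sums Psi_summable)
    thus ?thesis unfolding F6 by (simp add: sums_def)
  qed
  define f where "f N s = (t - s) powr (-\<beta>) * (\<Sum>m<N. T m s)" for N s
  define g where "g s = (t - s) powr (-\<beta>) * Dser s" for s
  define h where "h s = (t - s) powr (-\<beta>) * s powr (\<beta> - 1) * C" for s
  have fI: "(f N has_integral (\<Sum>m<N. v m)) {0..t}" for N
  proof -
    have "((\<lambda>s. \<Sum>m<N. (t - s) powr (-\<beta>) * T m s) has_integral (\<Sum>m<N. v m)) {0..t}"
      by (intro has_integral_sum F5) auto
    moreover have "f N = (\<lambda>s. \<Sum>m<N. (t - s) powr (-\<beta>) * T m s)"
      by (rule ext) (simp add: f_def sum_distrib_left)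
    ultimately show ?thesis by simp
  qed
  have hI: "h integrable_on {0..t}"
  proof -
    have "((\<lambda>s. (t - s) powr (-\<beta>) * s powr (\<beta> - 1)) has_integral (t powr (\<beta> - \<beta>) * Beta \<beta> (1 - \<beta>))) {0..t}"
      by (rule beta_int[OF t \<beta>(1) \<beta>(1) b1])
    hence "((\<lambda>s. (t - s) powr (-\<beta>) * s powr (\<beta> - 1) * C) has_integral (t powr (\<beta> - \<beta>) * Beta \<beta> (1 - \<beta>)) * C) {0..t}"
      by (rule has_integral_mult_left)
    thus ?thesis unfolding h_def[abs_def] by blast
  qed
  have DC: "g integrable_on {0..t}" "(\<lambda>N. integral {0..t} (f N)) \<longlonglongrightarrow> integral {0..t} g"
  proof -
    have fi: "f N integrable_on {0..t}" for N using fI by blast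
    have le: "norm (f N s) \<le> h s" if "s \<in> {0..t}" for N s
    proof -
      have s: "0 \<le> s" "s \<le> t" using that by auto
      have "norm (f N s) = (t - s) powr (-\<beta>) * \<bar>\<Sum>m<N. T m s\<bar>" by (simp add: f_def abs_mult)
      also have "\<dots> \<le> (t - s) powr (-\<beta>) * (C * s powr (\<beta> - 1))"
        by (intro mult_left_mono F4b s) simp
      finally show ?thesis by (simp add: h_def mult_ac)
    qed
    have cv: "(\<lambda>N. f N s) \<longlonglongrightarrow> g s" if "s \<in> {0..t}" for s
    proof -
      have s: "0 \<le> s" "s \<le> t" using that by auto
      have "(\<lambda>N. \<Sum>m<N. T m s) \<longlonglongrightarrow> Dser s" unfolding Dser_def
        by (rule summable_LIMSEQ) (rule F4s[OF s])
      thus ?thesis unfolding f_def g_def by (rule tendsto_mult_left)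
    qed
    show "g integrable_on {0..t}" "(\<lambda>N. integral {0..t} (f N)) \<longlonglongrightarrow> integral {0..t} g"
      using dominated_convergence[OF fi hI le cv] by auto
  qed
  have intg: "integral {0..t} g = Gamma (1 - \<beta>) * (- K) * Ps n (X t)"
  proof -
    have "(\<lambda>N. integral {0..t} (f N)) = (\<lambda>N. \<Sum>m<N. v m)"
      using fI by (auto intro: integral_unique)
    with DC(2) F7 show ?thesis using LIMSEQ_unique by metis
  qed
  have eqI: "(t - s) powr (-\<beta>) * deriv (p n) s = g s" if "s \<in> {0..t} - {0}" for s
  proof -
    have s0: "s > 0" using that by auto
    have "deriv (p n) s = Ph' n (X s) * (- K * (\<beta> * s powr (\<beta> - 1)))"
      by (rule DERIV_imp_deriv[OF pder[OF s0]])
    thus ?thesis using F1[OF s0] by (simp add: g_def)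
  qed
  have gH: "(g has_integral integral {0..t} g) {0..t}" using DC(1) by (rule integrable_integral)
  have pH: "((\<lambda>s. (t - s) powr (-\<beta>) * deriv (p n) s) has_integral integral {0..t} g) {0..t}"
    by (rule has_integral_spike_finite[OF _ _ gH, of "{0}"]) (use eqI in auto)
  have diff: "\<forall>s\<in>{0<..<t}. p n differentiable (at s)"
  proof
    fix s assume "s \<in> {0<..<t}"
    hence "s > 0" by simp
    from pder[OF this, of n] show "p n differentiable (at s)"
      unfolding has_field_derivative_def differentiable_def by blast
  qed
  have cont: "continuous_on {0..t} (p n)" by (rule continuous_on_subset[OF pcont]) auto
  have I1: "integral {0..t} (\<lambda>s. (t - s) powr (-\<beta>) * deriv (p n) s) = Gamma (1 - \<beta>) * (- K) * Ps n (X t)"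
    using integral_unique[OF pH] intg by simp
  have V: "- K * Ps n (X t) = integral {0..t} (\<lambda>s. (t - s) powr (-\<beta>) * deriv (p n) s) / Gamma (1 - \<beta>)"
    unfolding I1 using G1b by simp
  have ne: "\<beta> \<noteq> 1" using b1 by simp
  show ?thesis
    unfolding has_caputo_deriv_def using ne cont diff has_integral_integrable[OF pH] V by simp
qed

lemma gen_fun:
  assumes t: "t \<ge> 0" and u: "\<bar>u\<bar> < 1"
  shows "(\<lambda>n. p n t * u ^ n) sums
          mittag_leffler \<beta> (- \<xi> * t powr \<beta> * (lam + 1) powr \<mu> * (1 - u) powr (\<alpha> * \<mu>)
                             / (lam + (1 - u) powr \<alpha>) powr \<mu>)"
proof -
  define Q where "Q m = X t ^ m / Gamma (\<beta> * real m + 1)" for m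
  define A where "A m n = e m n * u^n * Q m" for m n
  define B where "B m n = \<bar>u\<bar>^n * \<bar>Q m\<bar>" for m n
  define b where "b m = 1 / (1 - \<bar>u\<bar>) * \<bar>Q m\<bar>" for m
  define a where "a m = gg \<alpha> lam u powr (real m * \<mu>) * Q m" for m
  have AB: "\<bar>A m n\<bar> \<le> B m n" for m n
  proof -
    have "\<bar>A m n\<bar> = \<bar>e m n\<bar> * (\<bar>u\<bar>^n * \<bar>Q m\<bar>)" by (simp add: A_def abs_mult power_abs)
    also have "\<dots> \<le> 1 * (\<bar>u\<bar>^n * \<bar>Q m\<bar>)" using eb by (intro mult_right_mono) auto
    finally show ?thesis by (simp add: B_def)
  qed
  have Bs: "(\<lambda>n. B m n) sums b m" for m
  proof -
    have "(\<lambda>n. \<bar>u\<bar>^n) sums (1 / (1 - \<bar>u\<bar>))" using geometric_sums[of "\<bar>u\<bar>"] u by simp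
    thus ?thesis unfolding B_def b_def by (rule sums_mult2)
  qed
  have bs: "summable b"
  proof -
    have "summable (\<lambda>m. \<bar>X t\<bar>^m / Gamma (\<beta> * real m + 1))" by (rule ml_summable[OF \<beta>])
    moreover have "\<bar>Q m\<bar> = \<bar>X t\<bar>^m / Gamma (\<beta> * real m + 1)" for m
      using Gp[of m] by (simp add: Q_def abs_mult power_abs)
    ultimately have "summable (\<lambda>m. \<bar>Q m\<bar>)" by simp
    thus ?thesis unfolding b_def[abs_def] by (rule summable_mult)
  qed
  have As: "(\<lambda>n. A m n) sums a m" for m
    unfolding A_def a_def by (rule sums_mult2) (rule ee_gen[OF \<alpha> \<mu> lam u])
  have main: "(\<lambda>n. \<Sum>m. A m n) sums (\<Sum>m. a m)" using dswap(1)[OF AB Bs bs As] .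
  have lhs: "(\<Sum>m. A m n) = p n t * u^n" for n
  proof -
    have "p n t * u^n = (\<Sum>m. c n m * X t ^ m) * u^n" by (simp add: psol_eq[OF A] Phd)
    also have "\<dots> = (\<Sum>m. c n m * X t ^ m * u^n)" by (rule suminf_mult2) (rule cfs)
    also have "\<dots> = (\<Sum>m. A m n)" by (rule suminf_cong) (simp add: A_def Q_def cfd)
    finally show ?thesis by simp
  qed
  define Z where "Z = X t * gg \<alpha> lam u powr \<mu>"
  have rhs: "(\<Sum>m. a m) = mittag_leffler \<beta> Z"
  proof -
    have "a m = Z^m / Gamma (\<beta> * real m + 1)" for m
    proof -
      have "gg \<alpha> lam u powr (real m * \<mu>) = (gg \<alpha> lam u powr \<mu>)^m"
        using powr_mult_nat[of "gg \<alpha> lam u" \<mu> m] gg_pos[OF lam(1) u] by (simp add: mult.commute)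
      thus ?thesis by (simp add: a_def Q_def Z_def power_mult_distrib)
    qed
    thus ?thesis by (simp add: mittag_leffler_def)
  qed
  have Zeq: "Z = - \<xi> * t powr \<beta> * (lam + 1) powr \<mu> * (1 - u) powr (\<alpha> * \<mu>) / (lam + (1 - u) powr \<alpha>) powr \<mu>"
  proof -
    have u1: "1 - u > 0" using u by simp
    have "gg \<alpha> lam u powr \<mu> = ((1 - u) powr \<alpha>) powr \<mu> / (lam + (1 - u) powr \<alpha>) powr \<mu>"
      unfolding gg_def using u1 lam by (intro powr_divide)
    also have "((1 - u) powr \<alpha>) powr \<mu> = (1 - u) powr (\<alpha> * \<mu>)" by (simp add: powr_powr)
    finally show ?thesis by (simp add: Z_def XX_def[OF A])
  qed
  show ?thesis using main lhs rhs Zeq by simp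
qed

end

theorem mainTheorem17:
  fixes \<alpha> \<mu> \<beta> \<xi> lam :: real
  assumes "0 < \<alpha>" "\<alpha> \<le> 1" "0 < \<mu>" "\<mu> \<le> 1" "0 < \<beta>" "\<beta> \<le> 1"
    and "0 < \<xi>" and "0 < lam" and "lam \<noteq> 1"
  shows
    \<comment> \<open>absolute convergence of the inner series\<close>
    "(\<forall>m n. if lam < 1 then summable (\<lambda>s. \<bar>Eterm_small \<alpha> (real m * \<mu>) lam n s\<bar>)
                     else summable (\<lambda>s. \<bar>Eterm_large \<alpha> (real m * \<mu>) lam n s\<bar>))
   \<and> (\<forall>n. \<forall>t\<ge>0. summable (pterm \<alpha> \<mu> \<beta> \<xi> lam n t))
   \<comment> \<open>the series defines a solution of the Cauchy problem\<close>
   \<and> (\<forall>n. continuous_on {0..} (psol \<alpha> \<mu> \<beta> \<xi> lam n))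
   \<and> (\<forall>n. psol \<alpha> \<mu> \<beta> \<xi> lam n 0 = (if n = 0 then 1 else 0))
   \<and> (\<forall>n. \<forall>t>0. has_caputo_deriv \<beta> (psol \<alpha> \<mu> \<beta> \<xi> lam n)
          (- \<xi> * (lam + 1) powr \<mu> * (\<Sum>m\<le>n. ccoef \<alpha> \<mu> lam (n - m) * psol \<alpha> \<mu> \<beta> \<xi> lam m t)) t)
   \<comment> \<open>generating function\<close>
   \<and> (\<forall>t\<ge>0. \<forall>u. \<bar>u\<bar> < 1 \<longrightarrow>
        (\<lambda>n. psol \<alpha> \<mu> \<beta> \<xi> lam n t * u ^ n) sums
          mittag_leffler \<beta> (- \<xi> * t powr \<beta> * (lam + 1) powr \<mu> * (1 - u) powr (\<alpha> * \<mu>)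
                             / (lam + (1 - u) powr \<alpha>) powr \<mu>))"
proof -
  note A = assms(1,2,3,5,6,7,8,9)
  have c1: "\<forall>m n. if lam < 1 then summable (\<lambda>s. \<bar>Eterm_small \<alpha> (real m * \<mu>) lam n s\<bar>)
                     else summable (\<lambda>s. \<bar>Eterm_large \<alpha> (real m * \<mu>) lam n s\<bar>)"
    using ee_inner[OF assms(1,2,3,8,9)] by blast
  have c2: "\<forall>n. \<forall>t\<ge>0. summable (pterm \<alpha> \<mu> \<beta> \<xi> lam n t)"
    using pterm_summable[OF A] by blast
  have c3: "\<forall>n. continuous_on {0..} (psol \<alpha> \<mu> \<beta> \<xi> lam n)"
    using psol_cont[OF A] by blast
  have c4: "\<forall>n. psol \<alpha> \<mu> \<beta> \<xi> lam n 0 = (if n = 0 then 1 else 0)"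
    using psol_zero[OF A] by blast
  have c5: "\<forall>n. \<forall>t>0. has_caputo_deriv \<beta> (psol \<alpha> \<mu> \<beta> \<xi> lam n)
          (- \<xi> * (lam + 1) powr \<mu> * (\<Sum>m\<le>n. ccoef \<alpha> \<mu> lam (n - m) * psol \<alpha> \<mu> \<beta> \<xi> lam m t)) t"
  proof (intro allI impI)
    fix n :: nat and t :: real assume t: "t > 0"
    show "has_caputo_deriv \<beta> (psol \<alpha> \<mu> \<beta> \<xi> lam n)
          (- \<xi> * (lam + 1) powr \<mu> * (\<Sum>m\<le>n. ccoef \<alpha> \<mu> lam (n - m) * psol \<alpha> \<mu> \<beta> \<xi> lam m t)) t"
    proof (cases "\<beta> = 1")
      case True thus ?thesis using caputo_one[OF A True t, of n] target_eq[OF A, of n t] by simp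
    next
      case False hence b1: "\<beta> < 1" using assms(6) by simp
      show ?thesis using caputo_lt[OF A b1 t, of n] target_eq[OF A, of n t] by simp
    qed
  qed
  have c6: "\<forall>t\<ge>0. \<forall>u. \<bar>u\<bar> < 1 \<longrightarrow>
        (\<lambda>n. psol \<alpha> \<mu> \<beta> \<xi> lam n t * u ^ n) sums
          mittag_leffler \<beta> (- \<xi> * t powr \<beta> * (lam + 1) powr \<mu> * (1 - u) powr (\<alpha> * \<mu>)
                             / (lam + (1 - u) powr \<alpha>) powr \<mu>)"
    using gen_fun[OF A] by blast
  show ?thesis using c1 c2 c3 c4 c5 c6 by blast
qed


end
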